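(* Let $\mathcal M$ be a time-dependent finite-horizon MDP accessed through a quantum generative model $\mathcal G$, and let $\epsilon\in(0,\sqrt H]$ and $\delta\in(0,1)$. Run the algorithm QVI-4$(\mathcal M,\epsilon,\delta)$ described in the context. Then, with probability at least $1-\delta$, its outputs satisfy, for all $h\in[H]$ (componentwise), $V_h^*-\epsilon\le\hat V_h\le V_h^{\hat\pi}\le V_h^*$ and $Q_h^*-\epsilon\le\hat Q_h\le Q_h^{\hat\pi}\le Q_h^*$.
   Context: Write $[H]=\{0,\dots,H-1\}$. The MDP $\mathcal M=(\mathcal S,\mathcal A,\{P_h\},\{r_h\},H)$ has finite $\mathcal S,\mathcal A$ with $S=|\mathcal S|$ and $A=|\mathcal A|$, known rewards $r_h(s,a)\in[0,1]$, and transitions $P_h(\cdot\mid s,a)$. Write $P_{h|s,a}=(P_h(s'\mid s,a))_{s'}$. A policy is $\pi:\mathcal S\times[H]\to\mathcal A$. Value functions: - $V_h^\pi(s)=\mathbb E[\sum_{t=h}^{H-1}r_t(s_t,a_t)\mid s_h=s]$, with $a_t=\pi(s_t,t)$ and $s_{t+1}\sim P_t(\cdot\mid s_t,a_t)$. - $Q_h^\pi(s,a)$ is defined the same way but with $a_h=a$, so $Q_h^\pi(s,a)=r_h(s,a)+P_{h|s,a}^{\mathrm T}V^\pi_{h+1}$, with $V_H^\pi=0$. - $V_h^*=\max_\pi V_h^\pi$ and $Q_h^*=\max_\pi Q_h^\pi$. The quantum generative model is the unitary $\mathcal G:|s\rangle|a\rangle|h\rangle|0\rangle|0\rangle\mapsto|s\rangle|a\rangle|h\rangle\sum_{s'}\sqrt{P_h(s'\mid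 s,a)}|s'\rangle|j_{s'}\rangle$, with arbitrary auxiliary states $|j_{s'}\rangle$. Subroutines (both estimate $p^{\mathrm T}f$, given $U_p:|0\rangle|0\rangle\mapsto\sum_x\sqrt{p_x}|x\rangle|j_x\rangle$, here $\mathcal G$ at $(s,a,h)$, and a binary oracle for $f$): - QME1$_\zeta(p^{\mathrm T}f,\eta)$: assumes $0\le f\le u$ for a supplied $u$. Returns an estimate with error less than $\eta$ with probability greater than $1-\zeta$, using $O((u/\eta+\sqrt{u/\eta})\log(1/\zeta))$ queries. - QME2$_\zeta(p^{\mathrm T}f,\eta)$: assumes $\mathrm{Var}_{x\sim p}f(x)\le\sigma^2$ for a supplied $\sigma$ with $\eta\in(0,4\sigma)$. Returns an estimate with error less than $\eta$ with probability greater than $1-\zeta$, using $O((\sigma/\eta)\log^2(\sigma/\eta)\log(1/\zeta))$ queries. Algorithm QVI-4$(\mathcal M,\epsilon,\delta)$: - Set $K=\lceil\log_2(H/\epsilon)\rceil+1$, $\zeta=\delta/(4KHSA)$, $c=0.001$, $b=1$. - Set $V^{(0)}_{0,h}=\mathbf 0$ for all $h$, and let $\pi^{(0)}_0(s,h)$ be arbitrary actions. - For $k=0,\dots,K-1$: - Set $\epsilon_k=H/2^k$, $V_{k,H}=\mathbf 0$, $V^{(0)}_{k,H}=\mathbf 0$. - For all $(s,a,h)$: set $y_{k,h}(s,a)=\max\{\mathrm{QME1}_\zeta(P_{h|s,a}^{\mathrm T}(V^{(0)}_{k,h+1})^2,b)-(\mathrm{QME1}_\zeta(P_{h|s,a}^{\mathrm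 T}V^{(0)}_{k,h+1},b/H))^2,\,0\}$, with range bounds $u=H^2$ and $u=H$ respectively. - For all $(s,a,h)$: with $\eta_{k,h}(s,a)=c\epsilon H^{-1.5}\sqrt{y_{k,h}(s,a)+4b}$, set $x_{k,h}(s,a)=\mathrm{QME2}_\zeta(P_{h|s,a}^{\mathrm T}V^{(0)}_{k,h+1},\eta_{k,h}(s,a))-\eta_{k,h}(s,a)$, with variance bound $\sigma^2=y_{k,h}(s,a)+4b$. - For $h=H-1,\dots,0$: - For all $(s,a)$: set $g_{k,h}(s,a)=\mathrm{QME1}_\zeta(P_{h|s,a}^{\mathrm T}(V_{k,h+1}-V^{(0)}_{k,h+1}),c\epsilon_k/H)-c\epsilon_k/H$, with $u=2\epsilon_k$. - Set $Q_{k,h}(s,a)=\max\{r_h(s,a)+x_{k,h}(s,a)+g_{k,h}(s,a),0\}$. - Set $V_{k,h}(s)=\max_aQ_{k,h}(s,a)$ and $\pi_k(s,h)=\arg\max_aQ_{k,h}(s,a)$. - If $\max_aQ_{k,h}(s,a)\le V^{(0)}_{k,h}(s)$, reset $V_{k,h}(s)=V^{(0)}_{k,h}(s)$ and $\pi_k(s,h)=\pi^{(0)}_k(s,h)$. - Set $V^{(0)}_{k+1,h}=V_{k,h}$ and $\pi^{(0)}_{k+1}(\cdot,h)=\pi_k(\cdot,h)$ for all $h$. - Return $\hat\pi=\pi_{K-1}$, $\hat V_h=V_{K-1,h}$, $\hat Q_h=Q_{K-1,h}$. *)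

theory Defs
  imports "HOL-Analysis.Analysis" "HOL-Probability.Probability"
begin

text \<open>Transitions P h s a :: 's pmf (so P_{h|s,a} = pmf (P h s a)), rewards r h s a.
  Policies are maps pi :: 's => nat => 'a (state, time step).\<close>

definition pexp :: "'s::finite pmf \<Rightarrow> ('s \<Rightarrow> real) \<Rightarrow> real" where
  "pexp p f = (\<Sum>x\<in>UNIV. pmf p x * f x)"

definition pvar :: "'s::finite pmf \<Rightarrow> ('s \<Rightarrow> real) \<Rightarrow> real" where
  "pvar p f = (\<Sum>x\<in>UNIV. pmf p x * (f x - pexp p f)\<^sup>2)"

function Vpi :: "(nat \<Rightarrow> 's::finite \<Rightarrow> 'a \<Rightarrow> 's pmf) \<Rightarrow> (nat \<Rightarrow> 's \<Rightarrow> 'a \<Rightarrow> real) \<Rightarrow> nat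
    \<Rightarrow> ('s \<Rightarrow> nat \<Rightarrow> 'a) \<Rightarrow> nat \<Rightarrow> 's \<Rightarrow> real" where
  "Vpi P r H pol h s =
     (if h < H then r h s (pol s h) + (\<Sum>s'\<in>UNIV. pmf (P h s (pol s h)) s' * Vpi P r H pol (Suc h) s')
      else 0)"
  by pat_completeness auto
termination
  by (relation "Wellfounded.measure (\<lambda>(P,r,H,pol,h,s). H - h)") auto

declare Vpi.simps[simp del]

definition Qpi :: "(nat \<Rightarrow> 's::finite \<Rightarrow> 'a \<Rightarrow> 's pmf) \<Rightarrow> (nat \<Rightarrow> 's \<Rightarrow> 'a \<Rightarrow> real) \<Rightarrow> nat
    \<Rightarrow> ('s \<Rightarrow> nat \<Rightarrow> 'a) \<Rightarrow> nat \<Rightarrow> 's \<Rightarrow> 'a \<Rightarrow> real" where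
  "Qpi P r H pol h s a = r h s a + (\<Sum>s'\<in>UNIV. pmf (P h s a) s' * Vpi P r H pol (Suc h) s')"

definition Vstar :: "(nat \<Rightarrow> 's::finite \<Rightarrow> 'a \<Rightarrow> 's pmf) \<Rightarrow> (nat \<Rightarrow> 's \<Rightarrow> 'a \<Rightarrow> real) \<Rightarrow> nat
    \<Rightarrow> nat \<Rightarrow> 's \<Rightarrow> real" where
  "Vstar P r H h s = (SUP pol. Vpi P r H pol h s)"

definition Qstar :: "(nat \<Rightarrow> 's::finite \<Rightarrow> 'a \<Rightarrow> 's pmf) \<Rightarrow> (nat \<Rightarrow> 's \<Rightarrow> 'a \<Rightarrow> real) \<Rightarrow> nat
    \<Rightarrow> nat \<Rightarrow> 's \<Rightarrow> 'a \<Rightarrow> real" where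
  "Qstar P r H h s a = (SUP pol. Qpi P r H pol h s a)"

text \<open>An oracle takes the distribution p (accessed in reality through the quantum generative
  model at (s,a,h)), the function f, the supplied bound (u resp. sigma), the accuracy eta and
  the failure probability zeta, and returns a distribution of estimates.\<close>

type_synonym 's qme = "'s pmf \<Rightarrow> ('s \<Rightarrow> real) \<Rightarrow> real \<Rightarrow> real \<Rightarrow> real \<Rightarrow> real pmf"

definition QME1_spec :: "'s::finite qme \<Rightarrow> bool" where
  "QME1_spec qme1 \<longleftrightarrow>
     (\<forall>p f u \<eta> \<zeta>. (\<forall>x. 0 \<le> f x \<and> f x \<le> u) \<longrightarrow> 0 < \<eta> \<longrightarrow> 0 < \<zeta> \<longrightarrow>
        measure_pmf.prob (qme1 p f u \<eta> \<zeta>) {e. \<bar>e - pexp p f\<bar> < \<eta>} > 1 - \<zeta>)"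

definition QME2_spec :: "'s::finite qme \<Rightarrow> bool" where
  "QME2_spec qme2 \<longleftrightarrow>
     (\<forall>p f \<sigma> \<eta> \<zeta>. pvar p f \<le> \<sigma>\<^sup>2 \<longrightarrow> 0 < \<eta> \<longrightarrow> \<eta> < 4 * \<sigma> \<longrightarrow> 0 < \<zeta> \<longrightarrow>
        measure_pmf.prob (qme2 p f \<sigma> \<eta> \<zeta>) {e. \<bar>e - pexp p f\<bar> < \<eta>} > 1 - \<zeta>)"

definition qvi_c :: real where "qvi_c = 0.001"
definition qvi_b :: real where "qvi_b = 1"

definition qvi_K :: "nat \<Rightarrow> real \<Rightarrow> nat" where
  "qvi_K H \<epsilon> = nat \<lceil>log 2 (real H / \<epsilon>)\<rceil> + 1"

definition qvi_zeta :: "'s::finite itself \<Rightarrow> 'a::finite itself \<Rightarrow> nat \<Rightarrow> real \<Rightarrow> real \<Rightarrow> real" where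
  "qvi_zeta _ _ H \<epsilon> \<delta> =
     \<delta> / (4 * real (qvi_K H \<epsilon>) * real H * real CARD('s) * real CARD('a))"

type_synonym ('s,'a) qstate = "(nat \<Rightarrow> 's \<Rightarrow> real) \<times> ('s \<Rightarrow> nat \<Rightarrow> 'a) \<times> (nat \<Rightarrow> 's \<Rightarrow> 'a \<Rightarrow> real)"

text \<open>One step h of the backward loop in outer iteration k. V0, pi0 are V^{(0)}_k, pi^{(0)}_k;
  x is x_k; the state carries V_k, pi_k, Q_k computed so far (for indices > h).\<close>

definition qvi_step ::
  "'s::finite qme \<Rightarrow> (nat \<Rightarrow> 's \<Rightarrow> 'a::finite \<Rightarrow> 's pmf) \<Rightarrow> (nat \<Rightarrow> 's \<Rightarrow> 'a \<Rightarrow> real) \<Rightarrow> nat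
    \<Rightarrow> real \<Rightarrow> real \<Rightarrow> (nat \<Rightarrow> 's \<Rightarrow> real) \<Rightarrow> ('s \<Rightarrow> nat \<Rightarrow> 'a)
    \<Rightarrow> ('s \<times> 'a \<times> nat \<Rightarrow> real) \<Rightarrow> nat \<Rightarrow> ('s,'a) qstate \<Rightarrow> ('s,'a) qstate pmf" where
  "qvi_step qme1 P r H \<epsilon>k \<zeta> V0 pi0 x h st =
     (case st of (V, pol, Q) \<Rightarrow>
      do {
        G \<leftarrow> Pi_pmf UNIV 0 (\<lambda>(s,a). qme1 (P h s a) (\<lambda>s'. V (Suc h) s' - V0 (Suc h) s')
                                    (2 * \<epsilon>k) (qvi_c * \<epsilon>k / real H) \<zeta>);
        let g = (\<lambda>s a. G (s,a) - qvi_c * \<epsilon>k / real H);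
        let Qh = (\<lambda>s a. max (r h s a + x (s,a,h) + g s a) 0);
        let Vm = (\<lambda>s. Max (range (Qh s)));
        let am = (\<lambda>s. SOME a. \<forall>a'. Qh s a' \<le> Qh s a);
        let Vh = (\<lambda>s. if Vm s \<le> V0 h s then V0 h s else Vm s);
        let ph = (\<lambda>s. if Vm s \<le> V0 h s then pi0 s h else am s);
        return_pmf (V(h := Vh), (\<lambda>s t. if t = h then ph s else pol s t), Q(h := Qh))
      })"

text \<open>One outer iteration k: input (V^{(0)}_k, pi^{(0)}_k, _), output (V_k, pi_k, Q_k)
  = (V^{(0)}_{k+1}, pi^{(0)}_{k+1}, Q_k).  V_k H = 0 is maintained.\<close>

definition qvi_iter ::
  "'s::finite qme \<Rightarrow> 's qme \<Rightarrow> (nat \<Rightarrow> 's \<Rightarrow> 'a::finite \<Rightarrow> 's pmf) \<Rightarrow> (nat \<Rightarrow> 's \<Rightarrow> 'a \<Rightarrow> real)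
    \<Rightarrow> nat \<Rightarrow> real \<Rightarrow> real \<Rightarrow> nat \<Rightarrow> ('s,'a) qstate \<Rightarrow> ('s,'a) qstate pmf" where
  "qvi_iter qme1 qme2 P r H \<epsilon> \<zeta> k st =
     (case st of (V0, pi0, _) \<Rightarrow>
      do {
        let \<epsilon>k = real H / 2 ^ k;
        let I = (UNIV :: 's set) \<times> (UNIV :: 'a set) \<times> {..<H};
        E2 \<leftarrow> Pi_pmf I 0 (\<lambda>(s,a,h). qme1 (P h s a) (\<lambda>s'. (V0 (Suc h) s')\<^sup>2)
                              ((real H)\<^sup>2) qvi_b \<zeta>);
        E1 \<leftarrow> Pi_pmf I 0 (\<lambda>(s,a,h). qme1 (P h s a) (V0 (Suc h)) (real H) (qvi_b / real H) \<zeta>);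
        let y = (\<lambda>i. max (E2 i - (E1 i)\<^sup>2) 0);
        let \<eta> = (\<lambda>i. qvi_c * \<epsilon> * real H powr (-1.5) * sqrt (y i + 4 * qvi_b));
        X \<leftarrow> Pi_pmf I 0 (\<lambda>(s,a,h). qme2 (P h s a) (V0 (Suc h))
                              (sqrt (y (s,a,h) + 4 * qvi_b)) (\<eta> (s,a,h)) \<zeta>);
        let x = (\<lambda>i. X i - \<eta> i);
        foldl (\<lambda>M h. M \<bind> qvi_step qme1 P r H \<epsilon>k \<zeta> V0 pi0 x h)
              (return_pmf ((\<lambda>_ _. 0), pi0, (\<lambda>_ _ _. 0)))
              (rev [0..<H])
      })"

text \<open>QVI-4: returns the distribution of (hat V, hat pi, hat Q) = (V_{K-1}, pi_{K-1}, Q_{K-1}).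
  pi_init is the arbitrary initial policy pi^{(0)}_0.\<close>

definition QVI4 ::
  "'s::finite qme \<Rightarrow> 's qme \<Rightarrow> (nat \<Rightarrow> 's \<Rightarrow> 'a::finite \<Rightarrow> 's pmf) \<Rightarrow> (nat \<Rightarrow> 's \<Rightarrow> 'a \<Rightarrow> real)
    \<Rightarrow> nat \<Rightarrow> ('s \<Rightarrow> nat \<Rightarrow> 'a) \<Rightarrow> real \<Rightarrow> real \<Rightarrow> ('s,'a) qstate pmf" where
  "QVI4 qme1 qme2 P r H pi_init \<epsilon> \<delta> =
     (let \<zeta> = qvi_zeta TYPE('s) TYPE('a) H \<epsilon> \<delta> in
      foldl (\<lambda>M k. M \<bind> qvi_iter qme1 qme2 P r H \<epsilon> \<zeta> k)
            (return_pmf ((\<lambda>_ _. 0), pi_init, (\<lambda>_ _ _. 0)))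
            [0..<qvi_K H \<epsilon>])"

end

theory Submission
  imports Defs
begin

lemma prob_bind_fail:
  fixes M :: "'x pmf" and f :: "'x \<Rightarrow> 'y pmf"
  assumes A: "measure_pmf.prob M {x. \<not> A x} \<le> a"
    and B: "\<And>x. x \<in> set_pmf M \<Longrightarrow> A x \<Longrightarrow> measure_pmf.prob (f x) {y. \<not> B y} \<le> b"
    and b0: "0 \<le> b"
  shows "measure_pmf.prob (M \<bind> f) {y. \<not> B y} \<le> a + b"
proof -
  have "emeasure (measure_pmf (M \<bind> f)) {y. \<not> B y} = (\<integral>\<^sup>+x. emeasure (f x) {y. \<not> B y} \<partial>M)"
    by simp
  also have "\<dots> \<le> (\<integral>\<^sup>+x. (indicator {x. \<not> A x} x + ennreal b) \<partial>M)"
  proof (rule nn_integral_mono_AE)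
    show "AE x in measure_pmf M. emeasure (measure_pmf (f x)) {y. \<not> B y} \<le> indicator {x. \<not> A x} x + ennreal b"
    proof (rule AE_pmfI)
      fix x assume x: "x \<in> set_pmf M"
      show "emeasure (measure_pmf (f x)) {y. \<not> B y} \<le> indicator {x. \<not> A x} x + ennreal b"
      proof (cases "A x")
        case True
        then have "emeasure (measure_pmf (f x)) {y. \<not> B y} \<le> ennreal b"
          using B[OF x] by (simp add: measure_pmf.emeasure_eq_measure ennreal_leI)
        then show ?thesis by (simp add: True)
      next
        case False
        have "emeasure (measure_pmf (f x)) {y. \<not> B y} \<le> 1"
          by (simp add: measure_pmf.emeasure_eq_measure)
        also have "\<dots> \<le> indicator {x. \<not> A x} x + ennreal b" using False by simp
        finally show ?thesis .
      qed
    qed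
  qed
  also have "\<dots> = emeasure (measure_pmf M) {x. \<not> A x} + ennreal b"
    by (subst nn_integral_add) (auto simp: measure_pmf.emeasure_space_1)
  also have "\<dots> = ennreal (measure_pmf.prob M {x. \<not> A x} + b)"
    by (simp add: measure_pmf.emeasure_eq_measure ennreal_plus b0)
  finally have "ennreal (measure_pmf.prob (M \<bind> f) {y. \<not> B y}) \<le> ennreal (measure_pmf.prob M {x. \<not> A x} + b)"
    by (simp add: measure_pmf.emeasure_eq_measure)
  then have "measure_pmf.prob (M \<bind> f) {y. \<not> B y} \<le> measure_pmf.prob M {x. \<not> A x} + b"
    by (subst (asm) ennreal_le_iff) (auto intro: add_nonneg_nonneg b0)
  then show ?thesis using A by linarith
qed

lemma prob_return_fail: "B x \<Longrightarrow> measure_pmf.prob (return_pmf x) {y. \<not> B y} = 0"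
  by (simp add: measure_return indicator_def)

lemma Pi_pmf_fail:
  assumes fin: "finite I"
    and F: "\<And>i. i \<in> I \<Longrightarrow> measure_pmf.prob (F i) {e. \<not> G i e} \<le> z"
  shows "measure_pmf.prob (Pi_pmf I d F) {X. \<not> (\<forall>i\<in>I. G i (X i))} \<le> real (card I) * z"
proof -
  have eq: "{X. \<not> (\<forall>i\<in>I. G i (X i))} = (\<Union>i\<in>I. {X. \<not> G i (X i)})" by auto
  have "measure_pmf.prob (Pi_pmf I d F) {X. \<not> (\<forall>i\<in>I. G i (X i))}
        \<le> (\<Sum>i\<in>I. measure_pmf.prob (Pi_pmf I d F) {X. \<not> G i (X i)})"
    unfolding eq by (rule measure_pmf.finite_measure_subadditive_finite) (use fin in auto)
  also have "\<dots> \<le> (\<Sum>i\<in>I. z)"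
  proof (rule sum_mono)
    fix i assume i: "i \<in> I"
    have "measure_pmf.prob (Pi_pmf I d F) {X. \<not> G i (X i)} =
          measure_pmf.prob (map_pmf (\<lambda>f. f i) (Pi_pmf I d F)) {e. \<not> G i e}"
      by (simp add: measure_map_pmf vimage_def)
    also have "\<dots> = measure_pmf.prob (F i) {e. \<not> G i e}"
      by (subst Pi_pmf_component[OF fin]) (simp add: i)
    finally show "measure_pmf.prob (Pi_pmf I d F) {X. \<not> G i (X i)} \<le> z" using F[OF i] by simp
  qed
  finally show ?thesis by simp
qed

lemma sum_pmf_univ: "(\<Sum>x\<in>UNIV. pmf p x) = 1" for p :: "'s::finite pmf"
  by (rule sum_pmf_eq_1) auto

lemma pexp_const[simp]: "pexp p (\<lambda>_. c) = c"
  by (simp add: pexp_def sum_distrib_right[symmetric] sum_pmf_univ)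

lemma pexp_add: "pexp p (\<lambda>x. f x + g x) = pexp p f + pexp p g"
  by (simp add: pexp_def distrib_left sum.distrib)

lemma pexp_diff: "pexp p (\<lambda>x. f x - g x) = pexp p f - pexp p g"
  by (simp add: pexp_def right_diff_distrib sum_subtractf)

lemma pexp_cmult: "pexp p (\<lambda>x. c * f x) = c * pexp p f"
  by (simp add: pexp_def sum_distrib_left mult.assoc mult.left_commute)

lemma pexp_affine: "pexp p (\<lambda>x. c * f x + d) = c * pexp p f + d"
  by (simp add: pexp_add pexp_cmult)

lemma pexp_mono: "(\<And>x. f x \<le> g x) \<Longrightarrow> pexp p f \<le> pexp p g"
  unfolding pexp_def by (intro sum_mono mult_left_mono) auto

lemma pexp_nonneg: "(\<And>x. 0 \<le> f x) \<Longrightarrow> 0 \<le> pexp p f"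
  using pexp_mono[of "\<lambda>_. 0" f p] by simp

lemma pexp_le_const: "(\<And>x. f x \<le> c) \<Longrightarrow> pexp p f \<le> c"
  using pexp_mono[of f "\<lambda>_. c" p] by simp

lemma pexp_ge_const: "(\<And>x. c \<le> f x) \<Longrightarrow> c \<le> pexp p f"
  using pexp_mono[of "\<lambda>_. c" f p] by simp

lemma pvar_alt: "pvar p f = pexp p (\<lambda>x. (f x)\<^sup>2) - (pexp p f)\<^sup>2"
proof -
  have "pvar p f = pexp p (\<lambda>x. (f x)\<^sup>2 + (-2 * pexp p f) * f x + (pexp p f)\<^sup>2)"
    unfolding pvar_def by (subst (2) pexp_def) (intro sum.cong refl, simp add: power2_eq_square algebra_simps)
  also have "\<dots> = pexp p (\<lambda>x. (f x)\<^sup>2) + (-2 * pexp p f) * pexp p f + (pexp p f)\<^sup>2"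
    by (simp only: pexp_add pexp_cmult pexp_const)
  also have "\<dots> = pexp p (\<lambda>x. (f x)\<^sup>2) - (pexp p f)\<^sup>2"
    by (simp add: power2_eq_square)
  finally show ?thesis .
qed

lemma pvar_nonneg: "0 \<le> pvar p f"
  unfolding pvar_def by (intro sum_nonneg) auto

lemma pvar_le_sq: "pvar p f \<le> pexp p (\<lambda>x. (f x)\<^sup>2)"
  using pvar_alt[of p f] by simp

lemma pexp_sqrt_le:
  assumes "\<And>x. 0 \<le> f x"
  shows "pexp p (\<lambda>x. sqrt (f x)) \<le> sqrt (pexp p f)"
proof -
  have "(pexp p (\<lambda>x. sqrt (f x)))\<^sup>2 \<le> pexp p (\<lambda>x. (sqrt (f x))\<^sup>2)"
    using pvar_nonneg[of p "\<lambda>x. sqrt (f x)"] pvar_alt[of p "\<lambda>x. sqrt (f x)"] by simp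
  also have "\<dots> = pexp p f" using assms by simp
  finally show ?thesis by (simp add: real_le_rsqrt)
qed

lemma pvar_sum_le: "pvar p (\<lambda>x. f x + g x) \<le> 2 * pvar p f + 2 * pvar p g"
proof -
  have "pvar p (\<lambda>x. f x + g x) = pexp p (\<lambda>x. ((f x - pexp p f) + (g x - pexp p g))\<^sup>2)"
    unfolding pvar_def pexp_add by (simp add: pexp_def algebra_simps)
  also have "\<dots> \<le> pexp p (\<lambda>x. 2 * (f x - pexp p f)\<^sup>2 + 2 * (g x - pexp p g)\<^sup>2)"
  proof (rule pexp_mono)
    fix x
    show "((f x - pexp p f) + (g x - pexp p g))\<^sup>2 \<le> 2 * (f x - pexp p f)\<^sup>2 + 2 * (g x - pexp p g)\<^sup>2"
      by (smt (verit) sum_squares_ge_zero power2_sum zero_le_power2 power2_diff)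
  qed
  also have "\<dots> = 2 * pvar p f + 2 * pvar p g"
    by (simp add: pexp_add pexp_cmult pvar_def pexp_def)
  finally show ?thesis .
qed

function evp :: "(nat \<Rightarrow> 's::finite \<Rightarrow> 'a \<Rightarrow> 's pmf) \<Rightarrow> nat \<Rightarrow> ('s \<Rightarrow> nat \<Rightarrow> 'a)
    \<Rightarrow> (nat \<Rightarrow> 's \<Rightarrow> real) \<Rightarrow> nat \<Rightarrow> 's \<Rightarrow> real" where
  "evp P H pol f t s = (if t < H then f t s +
      (\<Sum>s'\<in>UNIV. pmf (P t s (pol s t)) s' * evp P H pol f (Suc t) s') else 0)"
  by pat_completeness auto
termination
  by (relation "Wellfounded.measure (\<lambda>(P,H,pol,f,t,s). H - t)") auto

declare evp.simps[simp del]

lemma evp_eq: "evp P H pol f t s = (if t < H then f t s + pexp (P t s (pol s t)) (evp P H pol f (Suc t)) else 0)"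
  by (subst evp.simps) (simp add: pexp_def)

lemma evp_ge_H[simp]: "H \<le> t \<Longrightarrow> evp P H pol f t s = 0"
  by (simp add: evp_eq)

lemma evp_lt_H: "t < H \<Longrightarrow> evp P H pol f t s = f t s + pexp (P t s (pol s t)) (evp P H pol f (Suc t))"
  by (simp add: evp_eq)

lemma evp_super:
  assumes step: "\<And>t s. t0 \<le> t \<Longrightarrow> t < H \<Longrightarrow> D t s \<le> f t s + pexp (P t s (pol s t)) (D (Suc t))"
    and bot: "\<And>s. D H s \<le> 0"
  shows "t0 \<le> t \<Longrightarrow> t \<le> H \<Longrightarrow> D t s \<le> evp P H pol f t s"
proof (induction "H - t" arbitrary: t s)
  case 0
  then have "t = H" by simp
  then show ?case using bot by simp
next
  case (Suc n)
  then have t: "t < H" by simp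
  have IH: "\<And>s'. D (Suc t) s' \<le> evp P H pol f (Suc t) s'"
    using Suc by auto
  have "D t s \<le> f t s + pexp (P t s (pol s t)) (D (Suc t))" using step Suc t by auto
  also have "\<dots> \<le> f t s + pexp (P t s (pol s t)) (evp P H pol f (Suc t))"
    using pexp_mono[of "D (Suc t)" "evp P H pol f (Suc t)", OF IH] by simp
  also have "\<dots> = evp P H pol f t s" by (simp add: evp_lt_H[OF t])
  finally show ?case .
qed

lemma evp_mono:
  assumes "\<And>t s. t < H \<Longrightarrow> f t s \<le> g t s"
  shows "evp P H pol f t s \<le> evp P H pol g t s"
proof (induction "H - t" arbitrary: t s)
  case 0
  then show ?case by simp
next
  case (Suc n)
  then have t: "t < H" by simp
  have IH: "\<And>s'. evp P H pol f (Suc t) s' \<le> evp P H pol g (Suc t) s'"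
    using Suc by auto
  have "pexp (P t s (pol s t)) (evp P H pol f (Suc t)) \<le> pexp (P t s (pol s t)) (evp P H pol g (Suc t))"
    by (rule pexp_mono) (rule IH)
  then show ?case using assms[OF t, of s] by (simp add: evp_lt_H[OF t])
qed

lemma evp_affine:
  "evp P H pol (\<lambda>t s. c * f t s + d) t s = c * evp P H pol f t s + real (H - t) * d"
proof (induction "H - t" arbitrary: t s)
  case 0
  then show ?case by simp
next
  case (Suc n)
  then have t: "t < H" by simp
  have IH: "\<And>s'. evp P H pol (\<lambda>t s. c * f t s + d) (Suc t) s' = c * evp P H pol f (Suc t) s' + real (H - Suc t) * d"
    using Suc by auto
  have e: "real (H - t) = real (H - Suc t) + 1" using t by simp
  have "evp P H pol (\<lambda>t s. c * f t s + d) t s = c * f t s + d + pexp (P t s (pol s t)) (evp P H pol (\<lambda>t s. c * f t s + d) (Suc t))"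
    by (rule evp_lt_H[OF t])
  also have "\<dots> = c * f t s + d + pexp (P t s (pol s t)) (\<lambda>s'. c * evp P H pol f (Suc t) s' + real (H - Suc t) * d)"
    using IH by (metis (no_types) ext)
  also have "\<dots> = c * (f t s + pexp (P t s (pol s t)) (evp P H pol f (Suc t))) + real (H - t) * d"
    by (subst pexp_affine) (simp add: e algebra_simps)
  also have "\<dots> = c * evp P H pol f t s + real (H - t) * d" by (simp add: evp_lt_H[OF t])
  finally show ?case .
qed

lemma evp_nonneg:
  assumes "\<And>t s. t < H \<Longrightarrow> 0 \<le> f t s"
  shows "0 \<le> evp P H pol f t s"
  using evp_mono[of H "\<lambda>_ _. 0" f P pol t s] evp_affine[of P H pol 0 f 0 t s] assms by simp

lemma Vpi_evp: "Vpi P r H pol t s = evp P H pol (\<lambda>t s. r t s (pol s t)) t s"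
proof (induction "H - t" arbitrary: t s)
  case 0
  then show ?case by (simp add: Vpi.simps evp_eq)
next
  case (Suc n)
  then have t: "t < H" by simp
  have IH: "\<And>s'. Vpi P r H pol (Suc t) s' = evp P H pol (\<lambda>t s. r t s (pol s t)) (Suc t) s'"
    using Suc by auto
  show ?case by (subst Vpi.simps) (simp add: t evp_lt_H IH pexp_def)
qed

function vopt :: "(nat \<Rightarrow> 's::finite \<Rightarrow> 'a::finite \<Rightarrow> 's pmf) \<Rightarrow> (nat \<Rightarrow> 's \<Rightarrow> 'a \<Rightarrow> real)
    \<Rightarrow> nat \<Rightarrow> nat \<Rightarrow> 's \<Rightarrow> real" where
  "vopt P r H t s = (if t < H then Max (range (\<lambda>a. r t s a +
      (\<Sum>s'\<in>UNIV. pmf (P t s a) s' * vopt P r H (Suc t) s'))) else 0)"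
  by pat_completeness auto
termination
  by (relation "Wellfounded.measure (\<lambda>(P,r,H,t,s). H - t)") auto

declare vopt.simps[simp del]

definition qopt where "qopt P r H t s a = r t s a + pexp (P t s a) (vopt P r H (Suc t))"

definition pistar where "pistar P r H s t = (SOME a. \<forall>a'. qopt P r H t s a' \<le> qopt P r H t s a)"

lemma vopt_eq: "vopt P r H t s = (if t < H then Max (range (qopt P r H t s)) else 0)"
  by (subst vopt.simps) (simp add: qopt_def pexp_def)

lemma vopt_ge_H[simp]: "H \<le> t \<Longrightarrow> vopt P r H t s = 0"
  by (simp add: vopt_eq)

lemma qopt_le_vopt: "t < H \<Longrightarrow> qopt P r H t s a \<le> vopt P r H t s"
  by (simp add: vopt_eq)

lemma pistar_max: "qopt P r H t s a \<le> qopt P r H t s (pistar P r H s t)"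
proof -
  have "Max (range (qopt P r H t s)) \<in> range (qopt P r H t s)" by (rule Max_in) auto
  then obtain a0 where "Max (range (qopt P r H t s)) = qopt P r H t s a0" by blast
  then have "\<forall>a'. qopt P r H t s a' \<le> qopt P r H t s a0"
  proof (intro allI)
    fix a'
    assume e: "Max (range (qopt P r H t s)) = qopt P r H t s a0"
    have "qopt P r H t s a' \<le> Max (range (qopt P r H t s))" by (rule Max_ge) auto
    then show "qopt P r H t s a' \<le> qopt P r H t s a0" using e by simp
  qed
  then show ?thesis unfolding pistar_def by (rule someI2) auto
qed

lemma vopt_pistar: "t < H \<Longrightarrow> vopt P r H t s = qopt P r H t s (pistar P r H s t)"
proof -
  assume t: "t < H"
  have "Max (range (qopt P r H t s)) \<in> range (qopt P r H t s)" by (rule Max_in) auto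
  then obtain a0 where a0: "Max (range (qopt P r H t s)) = qopt P r H t s a0" by blast
  show ?thesis using a0 t pistar_max[of P r H t s a0] qopt_le_vopt[OF t, of P r s "pistar P r H s t"]
    by (simp add: vopt_eq)
qed

lemma Vpi_le_vopt: "Vpi P r H pol t s \<le> vopt P r H t s"
proof (induction "H - t" arbitrary: t s)
  case 0
  then show ?case by (simp add: Vpi.simps)
next
  case (Suc n)
  then have t: "t < H" by simp
  have IH: "\<And>s'. Vpi P r H pol (Suc t) s' \<le> vopt P r H (Suc t) s'"
    using Suc by auto
  have "Vpi P r H pol t s = r t s (pol s t) + pexp (P t s (pol s t)) (Vpi P r H pol (Suc t))"
    by (subst Vpi.simps) (simp add: t pexp_def)
  also have "\<dots> \<le> qopt P r H t s (pol s t)" unfolding qopt_def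
    using pexp_mono[of "Vpi P r H pol (Suc t)" "vopt P r H (Suc t)", OF IH] by simp
  also have "\<dots> \<le> vopt P r H t s" by (rule qopt_le_vopt[OF t])
  finally show ?case .
qed

lemma Vpi_pistar: "Vpi P r H (pistar P r H) t s = vopt P r H t s"
proof (induction "H - t" arbitrary: t s)
  case 0
  then show ?case by (simp add: Vpi.simps)
next
  case (Suc n)
  then have t: "t < H" by simp
  have IH: "\<And>s'. Vpi P r H (pistar P r H) (Suc t) s' = vopt P r H (Suc t) s'"
    using Suc by auto
  show ?case
    by (subst Vpi.simps) (simp add: t pexp_def[symmetric] IH vopt_pistar qopt_def)
qed

lemma Vstar_eq: "Vstar P r H t s = vopt P r H t s"
proof -
  have "vopt P r H t s \<in> range (\<lambda>pol. Vpi P r H pol t s)"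
    using Vpi_pistar[of P r H t s] by (metis rangeI)
  moreover have "\<And>x. x \<in> range (\<lambda>pol. Vpi P r H pol t s) \<Longrightarrow> x \<le> vopt P r H t s"
    using Vpi_le_vopt by blast
  ultimately show ?thesis unfolding Vstar_def by (rule cSup_eq_maximum)
qed

lemma Qpi_le_qopt: "Qpi P r H pol t s a \<le> qopt P r H t s a"
proof -
  have "Qpi P r H pol t s a = r t s a + pexp (P t s a) (Vpi P r H pol (Suc t))"
    by (simp add: Qpi_def pexp_def)
  also have "\<dots> \<le> qopt P r H t s a" unfolding qopt_def
    by (simp add: pexp_mono Vpi_le_vopt)
  finally show ?thesis .
qed

lemma Qstar_eq: "Qstar P r H t s a = qopt P r H t s a"
proof -
  have "Qpi P r H (pistar P r H) t s a = qopt P r H t s a"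
    by (simp add: Qpi_def qopt_def pexp_def Vpi_pistar)
  then have "qopt P r H t s a \<in> range (\<lambda>pol. Qpi P r H pol t s a)" by (metis rangeI)
  moreover have "\<And>x. x \<in> range (\<lambda>pol. Qpi P r H pol t s a) \<Longrightarrow> x \<le> qopt P r H t s a"
    using Qpi_le_qopt by blast
  ultimately show ?thesis unfolding Qstar_def by (rule cSup_eq_maximum)
qed

locale qvi_ctx =
  fixes P :: "nat \<Rightarrow> 's::finite \<Rightarrow> 'a::finite \<Rightarrow> 's pmf"
    and r :: "nat \<Rightarrow> 's \<Rightarrow> 'a \<Rightarrow> real"
    and H :: nat and \<epsilon> \<delta> :: real
    and qme1 qme2 :: "'s qme"
  assumes rew: "\<And>h s a. h < H \<Longrightarrow> 0 \<le> r h s a \<and> r h s a \<le> 1"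
    and eps: "0 < \<epsilon>" "\<epsilon> \<le> sqrt (real H)"
    and del: "0 < \<delta>" "\<delta> < 1"
    and q1: "QME1_spec qme1"
    and q2: "QME2_spec qme2"
begin

lemma H_pos: "1 \<le> H"
proof (rule ccontr)
  assume "\<not> 1 \<le> H" then have "H = 0" by simp
  then show False using eps by simp
qed

lemma vopt_step: "t < H \<Longrightarrow> vopt P r H t s = r t s (pistar P r H s t) + pexp (P t s (pistar P r H s t)) (vopt P r H (Suc t))"
  by (simp add: vopt_pistar qopt_def)

lemma vopt_bounds: "0 \<le> vopt P r H t s \<and> vopt P r H t s \<le> real (H - t)"
proof (induction "H - t" arbitrary: t s)
  case 0
  then show ?case by simp
next
  case (Suc n)
  then have t: "t < H" by simp
  have n: "n = H - Suc t" using Suc.hyps(2) by arith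
  have IH: "\<And>s'. 0 \<le> vopt P r H (Suc t) s' \<and> vopt P r H (Suc t) s' \<le> real (H - Suc t)"
    using Suc.hyps(1)[OF n] by blast
  have p1: "0 \<le> pexp (P t s (pistar P r H s t)) (vopt P r H (Suc t))"
    by (rule pexp_nonneg) (use IH in auto)
  have p2: "pexp (P t s (pistar P r H s t)) (vopt P r H (Suc t)) \<le> real (H - Suc t)"
    by (rule pexp_le_const) (use IH in auto)
  have "real (H - t) = real (H - Suc t) + 1" using t by simp
  then show ?case using vopt_step[OF t, of s] p1 p2 rew[OF t, of s "pistar P r H s t"] by simp
qed

definition vr where "vr t s = pvar (P t s (pistar P r H s t)) (vopt P r H (Suc t))"
definition WW where "WW t s = evp P H (pistar P r H) vr t s"

lemma WW_nonneg: "0 \<le> WW t s"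
  unfolding WW_def by (rule evp_nonneg) (simp add: vr_def pvar_nonneg)

lemma total_variance: "t \<le> H \<Longrightarrow> WW t s + (vopt P r H t s)\<^sup>2 \<le> (real (H - t))\<^sup>2"
proof (induction "H - t" arbitrary: t s)
  case 0
  then have "H \<le> t" by simp
  then show ?case by (simp add: WW_def)
next
  case (Suc n)
  then have t: "t < H" by simp
  define p where "p = P t s (pistar P r H s t)"
  define V' where "V' = vopt P r H (Suc t)"
  define W' where "W' = WW (Suc t)"
  define m where "m = pexp p V'"
  define rr where "rr = r t s (pistar P r H s t)"
  have n: "n = H - Suc t" using Suc.hyps(2) by arith
  have IH: "\<And>s'. W' s' + (V' s')\<^sup>2 \<le> (real (H - Suc t))\<^sup>2"
    using Suc.hyps(1)[OF n] t unfolding W'_def V'_def by simp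
  have r01: "0 \<le> rr" "rr \<le> 1" using rew[OF t] unfolding rr_def by auto
  have m0: "0 \<le> m" unfolding m_def V'_def by (rule pexp_nonneg) (use vopt_bounds in auto)
  have m1: "m \<le> real (H - Suc t)" unfolding m_def V'_def by (rule pexp_le_const) (use vopt_bounds in auto)
  have Wt: "WW t s = pvar p V' + pexp p W'"
    unfolding WW_def p_def V'_def W'_def by (simp add: evp_lt_H[OF t] vr_def)
  have vt: "vopt P r H t s = rr + m" unfolding rr_def m_def p_def V'_def using vopt_step[OF t] by simp
  have "WW t s + (vopt P r H t s)\<^sup>2 = pexp p (\<lambda>x. (V' x)\<^sup>2) - m\<^sup>2 + pexp p W' + (rr + m)\<^sup>2"
    using Wt vt pvar_alt[of p V'] unfolding m_def by simp
  also have "\<dots> = pexp p (\<lambda>x. W' x + (V' x)\<^sup>2) + rr\<^sup>2 + 2 * rr * m"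
    by (simp add: pexp_add power2_eq_square algebra_simps)
  also have "\<dots> \<le> (real (H - Suc t))\<^sup>2 + rr\<^sup>2 + 2 * rr * m"
    using pexp_le_const[of "\<lambda>x. W' x + (V' x)\<^sup>2" "(real (H - Suc t))\<^sup>2" p] IH by simp
  also have "\<dots> \<le> (real (H - Suc t) + rr)\<^sup>2"
  proof -
    have "rr * m \<le> rr * real (H - Suc t)" using r01 m1 by (intro mult_left_mono) auto
    moreover have "rr\<^sup>2 \<le> rr\<^sup>2" by simp
    ultimately show ?thesis by (simp add: power2_eq_square algebra_simps)
  qed
  also have "\<dots> \<le> (real (H - t))\<^sup>2"
    using r01 t by (intro power_mono) auto
  finally show ?case .
qed

lemma sqrt_cs: 
  fixes a b m :: real
  assumes "0 \<le> a" "0 \<le> b" "0 \<le> m"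
  shows "sqrt a + sqrt (m * b) \<le> sqrt ((m + 1) * (a + b))"
proof -
  have "2 * sqrt (m * a * b) \<le> b + m * a"
  proof -
    have "2 * sqrt (m * a) * sqrt b \<le> (sqrt (m * a))\<^sup>2 + (sqrt b)\<^sup>2"
      by (smt (verit) sum_squares_ge_zero power2_diff zero_le_power2)
    then show ?thesis using assms by (simp add: real_sqrt_mult power_mult_distrib mult.assoc)
  qed
  then have "(sqrt a + sqrt (m * b))\<^sup>2 \<le> (m + 1) * (a + b)"
    using assms by (simp add: power2_sum real_sqrt_mult algebra_simps)
  then show ?thesis
    using assms by (simp add: real_le_rsqrt)
qed

lemma sqrt_var_sum: "t \<le> H \<Longrightarrow> evp P H (pistar P r H) (\<lambda>t s. sqrt (vr t s)) t s \<le> sqrt (real (H - t) * WW t s)"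
proof (induction "H - t" arbitrary: t s)
  case 0
  then show ?case by simp
next
  case (Suc n)
  then have t: "t < H" by simp
  define p where "p = P t s (pistar P r H s t)"
  define m where "m = real (H - Suc t)"
  have n: "n = H - Suc t" using Suc.hyps(2) by arith
  have IH: "\<And>s'. evp P H (pistar P r H) (\<lambda>t s. sqrt (vr t s)) (Suc t) s' \<le> sqrt (m * WW (Suc t) s')"
    using Suc.hyps(1)[OF n] t unfolding m_def by simp
  have m0: "0 \<le> m" unfolding m_def by simp
  have "evp P H (pistar P r H) (\<lambda>t s. sqrt (vr t s)) t s
        = sqrt (vr t s) + pexp p (evp P H (pistar P r H) (\<lambda>t s. sqrt (vr t s)) (Suc t))"
    unfolding p_def by (simp add: evp_lt_H[OF t])
  also have "\<dots> \<le> sqrt (vr t s) + pexp p (\<lambda>s'. sqrt (m * WW (Suc t) s'))"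
    using pexp_mono[of _ _ p, OF IH] by simp
  also have "\<dots> \<le> sqrt (vr t s) + sqrt (pexp p (\<lambda>s'. m * WW (Suc t) s'))"
    using pexp_sqrt_le[of "\<lambda>s'. m * WW (Suc t) s'" p] m0 WW_nonneg by simp
  also have "\<dots> = sqrt (vr t s) + sqrt (m * pexp p (WW (Suc t)))"
    by (simp add: pexp_cmult)
  also have "\<dots> \<le> sqrt ((m + 1) * (vr t s + pexp p (WW (Suc t))))"
    by (rule sqrt_cs) (auto simp: vr_def pvar_nonneg m0 intro!: pexp_nonneg WW_nonneg)
  also have "\<dots> = sqrt (real (H - t) * WW t s)"
    unfolding WW_def m_def p_def using t by (simp add: evp_lt_H[OF t] vr_def[symmetric])
  finally show ?case .
qed

lemma sqrt_var_sum_bound: "evp P H (pistar P r H) (\<lambda>t s. sqrt (vr t s)) t s \<le> real H * sqrt (real H)"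
proof (cases "t \<le> H")
  case True
  have W: "WW t s \<le> (real H)\<^sup>2"
    using total_variance[OF True, of s] True
    by (smt (verit) of_nat_diff of_nat_le_iff power_mono zero_le_power2 of_nat_0_le_iff diff_le_self)
  have "real (H - t) * WW t s \<le> real H * (real H)\<^sup>2"
    using W WW_nonneg by (intro mult_mono) auto
  then have "sqrt (real (H - t) * WW t s) \<le> sqrt (real H * (real H)\<^sup>2)" by simp
  also have "\<dots> = real H * sqrt (real H)" by (simp add: real_sqrt_mult)
  finally show ?thesis using sqrt_var_sum[OF True, of s] by simp
next
  case False
  then show ?thesis by simp
qed

end

lemma prob_return_ok: "B x \<Longrightarrow> measure_pmf.prob (return_pmf x) {y. \<not> B y} \<le> 0"
  by (simp add: measure_return indicator_def)

lemma prob_not: "measure_pmf.prob p {x. \<not> Q x} = 1 - measure_pmf.prob p {x. Q x}"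
proof -
  have "{x. \<not> Q x} = space (measure_pmf p) - {x. Q x}" by auto
  then show ?thesis using measure_pmf.prob_compl[of "{x. Q x}" p] by simp
qed

lemma argmax_some:
  fixes f :: "'a::finite \<Rightarrow> real"
  shows "f a' \<le> f (SOME a. \<forall>a'. f a' \<le> f a)" and "Max (range f) = f (SOME a. \<forall>a'. f a' \<le> f a)"
proof -
  have "Max (range f) \<in> range f" by (rule Max_in) auto
  then obtain a0 where a0: "Max (range f) = f a0" by blast
  have all: "\<forall>a'. f a' \<le> f a0"
  proof
    fix a'
    have "f a' \<le> Max (range f)" by (rule Max_ge) auto
    then show "f a' \<le> f a0" using a0 by simp
  qed
  have s: "\<forall>a'. f a' \<le> f (SOME a. \<forall>a'. f a' \<le> f a)" by (rule someI[of _ a0]) (rule all)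
  then show "f a' \<le> f (SOME a. \<forall>a'. f a' \<le> f a)" by blast
  show "Max (range f) = f (SOME a. \<forall>a'. f a' \<le> f a)"
    using s all a0 by (metis order_antisym)
qed

definition stQ :: "(nat \<Rightarrow> 's \<Rightarrow> 'a \<Rightarrow> real) \<Rightarrow> nat \<Rightarrow> real \<Rightarrow> ('s \<times> 'a \<times> nat \<Rightarrow> real) \<Rightarrow> nat
   \<Rightarrow> ('s \<times> 'a \<Rightarrow> real) \<Rightarrow> 's \<Rightarrow> 'a \<Rightarrow> real" where
  "stQ r H \<epsilon>k x h G = (\<lambda>s a. max (r h s a + x (s,a,h) + (G (s,a) - qvi_c * \<epsilon>k / real H)) 0)"

definition stV :: "(nat \<Rightarrow> 's \<Rightarrow> real) \<Rightarrow> nat \<Rightarrow> ('s \<Rightarrow> 'a::finite \<Rightarrow> real) \<Rightarrow> 's \<Rightarrow> real" where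
  "stV V0 h Qh = (\<lambda>s. if Max (range (Qh s)) \<le> V0 h s then V0 h s else Max (range (Qh s)))"

definition stP :: "(nat \<Rightarrow> 's \<Rightarrow> real) \<Rightarrow> ('s \<Rightarrow> nat \<Rightarrow> 'a) \<Rightarrow> nat \<Rightarrow> ('s \<Rightarrow> 'a::finite \<Rightarrow> real) \<Rightarrow> 's \<Rightarrow> 'a" where
  "stP V0 pi0 h Qh = (\<lambda>s. if Max (range (Qh s)) \<le> V0 h s then pi0 s h else (SOME a. \<forall>a'. Qh s a' \<le> Qh s a))"

lemma qvi_step_eq:
  "qvi_step qme1 P r H \<epsilon>k \<zeta> V0 pi0 x h (V, pol, Q) =
   Pi_pmf UNIV 0 (\<lambda>(s,a). qme1 (P h s a) (\<lambda>s'. V (Suc h) s' - V0 (Suc h) s') (2 * \<epsilon>k) (qvi_c * \<epsilon>k / real H) \<zeta>)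
   \<bind> (\<lambda>G. return_pmf (V(h := stV V0 h (stQ r H \<epsilon>k x h G)),
            (\<lambda>s t. if t = h then stP V0 pi0 h (stQ r H \<epsilon>k x h G) s else pol s t),
            Q(h := stQ r H \<epsilon>k x h G)))"
  unfolding qvi_step_def stV_def stP_def stQ_def Let_def prod.case ..

context qvi_ctx begin

definition InvIn :: "nat \<Rightarrow> (nat \<Rightarrow> 's \<Rightarrow> real) \<Rightarrow> ('s \<Rightarrow> nat \<Rightarrow> 'a) \<Rightarrow> bool" where
  "InvIn k V0 pi0 \<longleftrightarrow> (\<forall>t s. H \<le> t \<longrightarrow> V0 t s = 0) \<and> (\<forall>t s. t < H \<longrightarrow> 0 \<le> V0 t s)
     \<and> (\<forall>t s. t < H \<longrightarrow> V0 t s \<le> r t s (pi0 s t) + pexp (P t s (pi0 s t)) (V0 (Suc t)))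
     \<and> (\<forall>t s. t < H \<longrightarrow> vopt P r H t s - V0 t s \<le> real H / 2 ^ k)"

lemma InvIn_le_vopt:
  assumes "InvIn k V0 pi0"
  shows "V0 t s \<le> vopt P r H t s"
proof (cases "t \<le> H")
  case True
  have "V0 t s \<le> evp P H pi0 (\<lambda>t s. r t s (pi0 s t)) t s"
    apply (rule evp_super[of 0])
    using assms True by (auto simp: InvIn_def)
  also have "\<dots> = Vpi P r H pi0 t s" by (simp add: Vpi_evp)
  also have "\<dots> \<le> vopt P r H t s" by (rule Vpi_le_vopt)
  finally show ?thesis .
next
  case False
  then show ?thesis using assms by (simp add: InvIn_def)
qed

lemma InvIn_nonneg: "InvIn k V0 pi0 \<Longrightarrow> 0 \<le> V0 t s"
  by (cases "t < H") (auto simp: InvIn_def)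

lemma InvIn_gap: "InvIn k V0 pi0 \<Longrightarrow> 0 \<le> vopt P r H t s - V0 t s \<and> vopt P r H t s - V0 t s \<le> real H / 2 ^ k"
  using InvIn_le_vopt[of k V0 pi0 t s]
  by (cases "t < H") (auto simp: InvIn_def)

definition InvS :: "(nat \<Rightarrow> 's \<Rightarrow> real) \<Rightarrow> ('s \<times> 'a \<times> nat \<Rightarrow> real) \<Rightarrow> nat \<Rightarrow> ('s,'a) qstate \<Rightarrow> bool" where
  "InvS V0 e h0 st \<longleftrightarrow> (case st of (V, pol, Q) \<Rightarrow>
     (\<forall>t s. H \<le> t \<longrightarrow> V t s = 0) \<and>
     (\<forall>t s. h0 \<le> t \<longrightarrow> t < H \<longrightarrow> V0 t s \<le> V t s \<and> V t s \<le> r t s (pol s t) + pexp (P t s (pol s t)) (V (Suc t))) \<and>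
     (\<forall>t s a. h0 \<le> t \<longrightarrow> t < H \<longrightarrow> Q t s a \<le> r t s a + pexp (P t s a) (V (Suc t))
         \<and> r t s a + pexp (P t s a) (V (Suc t)) - e (s,a,t) \<le> Q t s a \<and> Q t s a \<le> V t s))"

lemma InvS_le_vopt:
  assumes "InvS V0 e h0 (V, pol, Q)" "h0 \<le> t"
  shows "V t s \<le> vopt P r H t s"
proof (cases "t \<le> H")
  case True
  have "V t s \<le> evp P H pol (\<lambda>t s. r t s (pol s t)) t s"
    apply (rule evp_super[of h0])
    using assms True by (auto simp: InvS_def)
  also have "\<dots> = Vpi P r H pol t s" by (simp add: Vpi_evp)
  also have "\<dots> \<le> vopt P r H t s" by (rule Vpi_le_vopt)
  finally show ?thesis .
next
  case False
  then show ?thesis using assms by (simp add: InvS_def)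
qed

lemma step_det:
  assumes inv: "InvIn k V0 pi0" and h: "h < H" and S: "InvS V0 e (Suc h) (V, pol, Q)"
    and xb: "\<And>s a. pexp (P h s a) (V0 (Suc h)) - e0 (s,a,h) \<le> x (s,a,h) \<and> x (s,a,h) \<le> pexp (P h s a) (V0 (Suc h))"
    and ed: "\<And>s a. e (s,a,h) = e0 (s,a,h) + 2 * (qvi_c * \<epsilon>k / real H)"
    and Gg: "\<And>s a. \<bar>G (s,a) - pexp (P h s a) (\<lambda>s'. V (Suc h) s' - V0 (Suc h) s')\<bar> < qvi_c * \<epsilon>k / real H"
  shows "InvS V0 e h (V(h := stV V0 h (stQ r H \<epsilon>k x h G)),
            (\<lambda>s t. if t = h then stP V0 pi0 h (stQ r H \<epsilon>k x h G) s else pol s t),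
            Q(h := stQ r H \<epsilon>k x h G))"
proof -
  define Qh where "Qh = stQ r H \<epsilon>k x h G"
  define \<eta>1 where "\<eta>1 = qvi_c * \<epsilon>k / real H"
  have V0V: "\<And>s'. V0 (Suc h) s' \<le> V (Suc h) s'"
  proof -
    fix s'
    show "V0 (Suc h) s' \<le> V (Suc h) s'"
    proof (cases "Suc h < H")
      case True then show ?thesis using S by (simp add: InvS_def)
    next
      case False then show ?thesis using S inv by (simp add: InvS_def InvIn_def)
    qed
  qed
  have Vnn: "\<And>s'. 0 \<le> V (Suc h) s'"
    using V0V InvIn_nonneg[OF inv] by (meson order_trans)
  have Qb: "\<And>s a. r h s a + pexp (P h s a) (V (Suc h)) - e (s,a,h) \<le> Qh s a \<and> Qh s a \<le> r h s a + pexp (P h s a) (V (Suc h))"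
  proof -
    fix s a
    have pd: "pexp (P h s a) (\<lambda>s'. V (Suc h) s' - V0 (Suc h) s') = pexp (P h s a) (V (Suc h)) - pexp (P h s a) (V0 (Suc h))"
      by (rule pexp_diff)
    have r0: "0 \<le> r h s a" using rew[OF h] by auto
    have pv0: "0 \<le> pexp (P h s a) (V (Suc h))" by (rule pexp_nonneg) (rule Vnn)
    have G1: "\<bar>G (s,a) - (pexp (P h s a) (V (Suc h)) - pexp (P h s a) (V0 (Suc h)))\<bar> < \<eta>1"
      using Gg[of s a] pd unfolding \<eta>1_def by simp
    have Qhd: "Qh s a = max (r h s a + x (s,a,h) + (G (s,a) - \<eta>1)) 0"
      unfolding Qh_def stQ_def \<eta>1_def by simp
    show "r h s a + pexp (P h s a) (V (Suc h)) - e (s,a,h) \<le> Qh s a \<and> Qh s a \<le> r h s a + pexp (P h s a) (V (Suc h))"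
      using xb[of s a] ed[of s a] G1 Qhd r0 pv0 unfolding \<eta>1_def by (auto simp: abs_less_iff)
  qed
  have Qmax: "\<And>s a. Qh s a \<le> Max (range (Qh s))" by (rule Max_ge) auto
  have am: "\<And>s. Max (range (Qh s)) = Qh s (SOME a. \<forall>a'. Qh s a' \<le> Qh s a)"
    by (rule argmax_some(2))
  have stV_ge: "\<And>s. Max (range (Qh s)) \<le> stV V0 h Qh s \<and> V0 h s \<le> stV V0 h Qh s"
    unfolding stV_def by (smt (verit))
  have stV_le: "\<And>s. stV V0 h Qh s \<le> r h s (stP V0 pi0 h Qh s) + pexp (P h s (stP V0 pi0 h Qh s)) (V (Suc h))"
  proof -
    fix s
    show "stV V0 h Qh s \<le> r h s (stP V0 pi0 h Qh s) + pexp (P h s (stP V0 pi0 h Qh s)) (V (Suc h))"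
    proof (cases "Max (range (Qh s)) \<le> V0 h s")
      case True
      have "V0 h s \<le> r h s (pi0 s h) + pexp (P h s (pi0 s h)) (V0 (Suc h))"
        using inv h by (simp add: InvIn_def)
      also have "\<dots> \<le> r h s (pi0 s h) + pexp (P h s (pi0 s h)) (V (Suc h))"
        using pexp_mono[of "V0 (Suc h)" "V (Suc h)", OF V0V] by simp
      finally show ?thesis using True by (simp add: stV_def stP_def)
    next
      case False
      have e1: "stV V0 h Qh s = Max (range (Qh s))" unfolding stV_def by (rule if_not_P[OF False])
      have e2: "stP V0 pi0 h Qh s = (SOME a. \<forall>a'. Qh s a' \<le> Qh s a)" unfolding stP_def by (rule if_not_P[OF False])
      show ?thesis unfolding e1 e2 am[of s] using Qb[of s "SOME a. \<forall>a'. Qh s a' \<le> Qh s a"] by simp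
    qed
  qed
  have S1: "\<forall>t s. H \<le> t \<longrightarrow> V t s = 0"
    and S2: "\<forall>t s. Suc h \<le> t \<longrightarrow> t < H \<longrightarrow> V0 t s \<le> V t s \<and> V t s \<le> r t s (pol s t) + pexp (P t s (pol s t)) (V (Suc t))"
    and S3: "\<forall>t s a. Suc h \<le> t \<longrightarrow> t < H \<longrightarrow> Q t s a \<le> r t s a + pexp (P t s a) (V (Suc t))
         \<and> r t s a + pexp (P t s a) (V (Suc t)) - e (s,a,t) \<le> Q t s a \<and> Q t s a \<le> V t s"
    using S unfolding InvS_def by auto
  show ?thesis
    unfolding InvS_def Qh_def[symmetric] prod.case
  proof (intro conjI allI impI)
    fix t s assume "H \<le> t"
    then show "(V(h := stV V0 h Qh)) t s = 0" using S1 h by auto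
  next
    fix t s assume t: "h \<le> t" "t < H"
    show "V0 t s \<le> (V(h := stV V0 h Qh)) t s"
      using S2 stV_ge t by (cases "t = h") auto
    show "(V(h := stV V0 h Qh)) t s
      \<le> r t s (if t = h then stP V0 pi0 h Qh s else pol s t) +
         pexp (P t s (if t = h then stP V0 pi0 h Qh s else pol s t)) ((V(h := stV V0 h Qh)) (Suc t))"
    proof (cases "t = h")
      case True
      then show ?thesis using stV_le[of s] by simp
    next
      case False
      then show ?thesis using S2 t by auto
    qed
  next
    fix t s a assume t: "h \<le> t" "t < H"
    show "(Q(h := Qh)) t s a \<le> r t s a + pexp (P t s a) ((V(h := stV V0 h Qh)) (Suc t))"
      using Qb[of s a] S3 t by (cases "t = h") auto
    show "r t s a + pexp (P t s a) ((V(h := stV V0 h Qh)) (Suc t)) - e (s, a, t) \<le> (Q(h := Qh)) t s a"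
      using Qb[of s a] S3 t by (cases "t = h") auto
    show "(Q(h := Qh)) t s a \<le> (V(h := stV V0 h Qh)) t s"
      using Qmax[of s a] stV_ge[of s] S3 t by (cases "t = h") auto
  qed
qed

lemma step_prob:
  assumes inv: "InvIn k V0 pi0" and h: "h < H" and S: "InvS V0 e (Suc h) (V, pol, Q)"
    and xb: "\<And>s a. pexp (P h s a) (V0 (Suc h)) - e0 (s,a,h) \<le> x (s,a,h) \<and> x (s,a,h) \<le> pexp (P h s a) (V0 (Suc h))"
    and ed: "\<And>s a. e (s,a,h) = e0 (s,a,h) + 2 * (qvi_c * \<epsilon>k / real H)"
    and ek: "\<epsilon>k = real H / 2 ^ k" and z: "0 < \<zeta>"
  shows "measure_pmf.prob (qvi_step qme1 P r H \<epsilon>k \<zeta> V0 pi0 x h (V, pol, Q)) {st. \<not> InvS V0 e h st}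
         \<le> real CARD('s \<times> 'a) * \<zeta>"
proof -
  define f where "f = (\<lambda>s'. V (Suc h) s' - V0 (Suc h) s')"
  define \<eta>1 where "\<eta>1 = qvi_c * \<epsilon>k / real H"
  have Hp: "0 < real H" using H_pos by simp
  have ekp: "0 < \<epsilon>k" using ek Hp by simp
  have \<eta>1p: "0 < \<eta>1" unfolding \<eta>1_def qvi_c_def using ekp Hp by simp
  have frange: "\<forall>s'. 0 \<le> f s' \<and> f s' \<le> 2 * \<epsilon>k"
  proof
    fix s'
    show "0 \<le> f s' \<and> f s' \<le> 2 * \<epsilon>k"
    proof (cases "Suc h < H")
      case True
      have "V0 (Suc h) s' \<le> V (Suc h) s'" using S True by (simp add: InvS_def)
      moreover have "V (Suc h) s' \<le> vopt P r H (Suc h) s'" by (rule InvS_le_vopt[OF S]) simp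
      moreover have "vopt P r H (Suc h) s' - V0 (Suc h) s' \<le> \<epsilon>k" using InvIn_gap[OF inv] ek by blast
      ultimately show ?thesis unfolding f_def using ekp by auto
    next
      case False
      then have "H \<le> Suc h" by simp
      then show ?thesis using S inv ekp unfolding f_def by (simp add: InvS_def InvIn_def)
    qed
  qed
  have fail: "\<And>s a. measure_pmf.prob (qme1 (P h s a) f (2 * \<epsilon>k) \<eta>1 \<zeta>) {g. \<not> \<bar>g - pexp (P h s a) f\<bar> < \<eta>1} \<le> \<zeta>"
  proof -
    fix s a
    have "measure_pmf.prob (qme1 (P h s a) f (2 * \<epsilon>k) \<eta>1 \<zeta>) {g. \<bar>g - pexp (P h s a) f\<bar> < \<eta>1} > 1 - \<zeta>"
      using q1 frange \<eta>1p z unfolding QME1_spec_def by blast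
    then show "measure_pmf.prob (qme1 (P h s a) f (2 * \<epsilon>k) \<eta>1 \<zeta>) {g. \<not> \<bar>g - pexp (P h s a) f\<bar> < \<eta>1} \<le> \<zeta>"
      by (simp add: prob_not)
  qed
  have P1: "measure_pmf.prob (Pi_pmf UNIV 0 (\<lambda>(s,a). qme1 (P h s a) f (2 * \<epsilon>k) \<eta>1 \<zeta>))
      {G. \<not> (\<forall>i\<in>UNIV. \<bar>G i - pexp (P h (fst i) (snd i)) f\<bar> < \<eta>1)} \<le> real (card (UNIV :: ('s \<times> 'a) set)) * \<zeta>"
    by (rule Pi_pmf_fail) (auto simp: fail split: prod.splits)
  have P2: "measure_pmf.prob (return_pmf (V(h := stV V0 h (stQ r H \<epsilon>k x h G)),
            (\<lambda>s t. if t = h then stP V0 pi0 h (stQ r H \<epsilon>k x h G) s else pol s t),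
            Q(h := stQ r H \<epsilon>k x h G))) {st. \<not> InvS V0 e h st} \<le> 0"
    if "G \<in> set_pmf (Pi_pmf UNIV 0 (\<lambda>(s,a). qme1 (P h s a) f (2 * \<epsilon>k) \<eta>1 \<zeta>))"
       "\<forall>i\<in>UNIV. \<bar>G i - pexp (P h (fst i) (snd i)) f\<bar> < \<eta>1" for G
  proof (rule prob_return_ok, rule step_det[OF inv h S xb ed])
    fix s a
    show "\<bar>G (s, a) - pexp (P h s a) (\<lambda>s'. V (Suc h) s' - V0 (Suc h) s')\<bar> < qvi_c * \<epsilon>k / real H"
      using that(2) unfolding f_def \<eta>1_def by force
  qed
  have "measure_pmf.prob (Pi_pmf UNIV 0 (\<lambda>(s,a). qme1 (P h s a) f (2 * \<epsilon>k) \<eta>1 \<zeta>) \<bind>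
      (\<lambda>G. return_pmf (V(h := stV V0 h (stQ r H \<epsilon>k x h G)),
            (\<lambda>s t. if t = h then stP V0 pi0 h (stQ r H \<epsilon>k x h G) s else pol s t),
            Q(h := stQ r H \<epsilon>k x h G)))) {st. \<not> InvS V0 e h st} \<le> real (card (UNIV :: ('s \<times> 'a) set)) * \<zeta> + 0"
    by (rule prob_bind_fail[OF P1 P2]) simp_all
  then show ?thesis unfolding qvi_step_eq f_def \<eta>1_def by simp
qed

lemma inner_prob:
  assumes inv: "InvIn k V0 pi0"
    and xb: "\<And>s a t. t < H \<Longrightarrow> pexp (P t s a) (V0 (Suc t)) - e0 (s,a,t) \<le> x (s,a,t) \<and> x (s,a,t) \<le> pexp (P t s a) (V0 (Suc t))"
    and ed: "\<And>s a t. e (s,a,t) = e0 (s,a,t) + 2 * (qvi_c * \<epsilon>k / real H)"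
    and ek: "\<epsilon>k = real H / 2 ^ k" and z: "0 < \<zeta>"
  shows "j \<le> H \<Longrightarrow> measure_pmf.prob (foldl (\<lambda>M h. M \<bind> qvi_step qme1 P r H \<epsilon>k \<zeta> V0 pi0 x h)
            (return_pmf ((\<lambda>_ _. 0), pi0, (\<lambda>_ _ _. 0))) (rev [H - j..<H])) {st. \<not> InvS V0 e (H - j) st}
         \<le> real j * (real CARD('s \<times> 'a) * \<zeta>)"
proof (induction j)
  case 0
  have "InvS V0 e H ((\<lambda>_ _. 0), pi0, (\<lambda>_ _ _. 0))" by (simp add: InvS_def)
  then show ?case by (simp add: prob_return_ok)
next
  case (Suc j)
  define h where "h = H - Suc j"
  have h: "h < H" and hs: "Suc h = H - j" using Suc.prems unfolding h_def by auto
  have upt: "[h..<H] = h # [H - j..<H]" using h hs by (simp add: upt_conv_Cons)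
  have IH: "measure_pmf.prob (foldl (\<lambda>M h. M \<bind> qvi_step qme1 P r H \<epsilon>k \<zeta> V0 pi0 x h)
            (return_pmf ((\<lambda>_ _. 0), pi0, (\<lambda>_ _ _. 0))) (rev [H - j..<H])) {st. \<not> InvS V0 e (H - j) st}
         \<le> real j * (real CARD('s \<times> 'a) * \<zeta>)" using Suc by simp
  have "measure_pmf.prob (foldl (\<lambda>M h. M \<bind> qvi_step qme1 P r H \<epsilon>k \<zeta> V0 pi0 x h)
            (return_pmf ((\<lambda>_ _. 0), pi0, (\<lambda>_ _ _. 0))) (rev [H - j..<H]) \<bind> qvi_step qme1 P r H \<epsilon>k \<zeta> V0 pi0 x h)
            {st. \<not> InvS V0 e h st}
         \<le> real j * (real CARD('s \<times> 'a) * \<zeta>) + real CARD('s \<times> 'a) * \<zeta>"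
  proof (rule prob_bind_fail[OF IH])
    fix st assume A: "InvS V0 e (H - j) st"
    obtain V pol Q where st: "st = (V, pol, Q)" by (cases st) auto
    show "measure_pmf.prob (qvi_step qme1 P r H \<epsilon>k \<zeta> V0 pi0 x h st) {st. \<not> InvS V0 e h st} \<le> real CARD('s \<times> 'a) * \<zeta>"
      unfolding st
      by (rule step_prob[OF inv h _ xb[OF h] ed ek z]) (use A st hs in simp)
  next
    show "0 \<le> real CARD('s \<times> 'a) * \<zeta>" using z by simp
  qed
  then show ?case unfolding upt h_def[symmetric] by (simp add: algebra_simps)
qed

end

context qvi_ctx begin

definition Qprop :: "nat \<Rightarrow> (nat \<Rightarrow> 's \<Rightarrow> 'a \<Rightarrow> real) \<Rightarrow> (nat \<Rightarrow> 's \<Rightarrow> real) \<Rightarrow> bool" where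
  "Qprop n Q V \<longleftrightarrow> (\<forall>t s a. t < H \<longrightarrow> Q t s a \<le> r t s a + pexp (P t s a) (V (Suc t)) \<and>
      qopt P r H t s a - (real H / 2 ^ n + 4 * qvi_c * (real H / 2 ^ n) + 12 * qvi_c * \<epsilon>) \<le> Q t s a)"

definition J :: "nat \<Rightarrow> ('s,'a) qstate \<Rightarrow> bool" where
  "J n st \<longleftrightarrow> (case st of (V, pol, Q) \<Rightarrow> InvIn n V pol \<and> (0 < n \<longrightarrow> Qprop n Q V))"

lemma sqrt2_le: "sqrt 2 \<le> 3/2"
  by (rule real_le_lsqrt) (auto simp: power2_eq_square)

lemma numeric1:
  fixes u ek :: real
  assumes u: "1 \<le> u" and e1: "\<epsilon> \<le> u" and e2: "\<epsilon> \<le> 2 * ek" and ekp: "0 < ek"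
  shows "2 * sqrt 2 * qvi_c * \<epsilon> + 2 * (qvi_c * \<epsilon> / u) * (sqrt 2 * ek + 3) + 2 * qvi_c * ek \<le> ek / 2"
proof -
  have c: "qvi_c = 1/1000" by (simp add: qvi_c_def)
  have s2: "0 \<le> sqrt 2" "sqrt 2 \<le> 3/2" using sqrt2_le by auto
  have ep: "0 < \<epsilon>" using eps by simp
  have q1: "\<epsilon> / u \<le> 1" using e1 u by simp
  have "\<epsilon> / u \<le> \<epsilon> / 1" by (rule divide_left_mono) (use u ep in auto)
  then have q2: "\<epsilon> / u \<le> 2 * ek" using e2 by simp
  have q0: "0 \<le> \<epsilon> / u" using ep u by simp
  have a1: "sqrt 2 * \<epsilon> \<le> 3/2 * (2 * ek)" using s2 e2 ep by (intro mult_mono) auto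
  have a2: "(\<epsilon> / u) * (sqrt 2 * ek) \<le> 1 * (3/2 * ek)" using q1 q0 s2 ekp by (intro mult_mono mult_right_mono) auto
  have a3: "(\<epsilon> / u) * 3 \<le> (2 * ek) * 3" using q2 by (intro mult_right_mono) auto
  have "2 * sqrt 2 * qvi_c * \<epsilon> + 2 * (qvi_c * \<epsilon> / u) * (sqrt 2 * ek + 3) + 2 * qvi_c * ek
      = qvi_c * (2 * (sqrt 2 * \<epsilon>) + 2 * ((\<epsilon> / u) * (sqrt 2 * ek)) + 2 * ((\<epsilon> / u) * 3) + 2 * ek)"
    by (simp add: algebra_simps)
  also have "\<dots> \<le> qvi_c * (2 * (3/2 * (2 * ek)) + 2 * (1 * (3/2 * ek)) + 2 * ((2 * ek) * 3) + 2 * ek)"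
  proof (rule mult_left_mono)
    show "2 * (sqrt 2 * \<epsilon>) + 2 * ((\<epsilon> / u) * (sqrt 2 * ek)) + 2 * ((\<epsilon> / u) * 3) + 2 * ek \<le> 2 * (3/2 * (2 * ek)) + 2 * (1 * (3/2 * ek)) + 2 * ((2 * ek) * 3) + 2 * ek"
      using a1 a2 a3 by linarith
  qed (simp add: c)
  also have "\<dots> \<le> ek / 2" using ekp by (simp add: c)
  finally show ?thesis .
qed

lemma final_of_InvS:
  assumes inv: "InvIn k V0 pi0" and S: "InvS V0 e 0 (V, pol, Q)"
    and kK: "\<epsilon> \<le> 2 * \<epsilon>k"
    and E1: "\<And>s a t. t < H \<Longrightarrow> e (s,a,t) \<le> 2 * \<alpha> * (sqrt 2 * sqrt (pvar (P t s a) (vopt P r H (Suc t))) + sqrt 2 * \<epsilon>k + 3) + 2 * (qvi_c * \<epsilon>k / real H)"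
    and al: "\<alpha> = qvi_c * \<epsilon> / (real H * sqrt (real H))"
    and ek: "\<epsilon>k = real H / 2 ^ k"
  shows "J (Suc k) (V, pol, Q)"
proof -
  define u where "u = sqrt (real H)"
  define pis where "pis = pistar P r H"
  define C where "C = 2 * \<alpha> * (sqrt 2 * \<epsilon>k + 3) + 2 * (qvi_c * \<epsilon>k / real H)"
  have Hp: "1 \<le> real H" using H_pos by simp
  have u1: "1 \<le> u" unfolding u_def using Hp by simp
  have uu: "u * u = real H" unfolding u_def by simp
  have eu: "\<epsilon> \<le> u" unfolding u_def using eps by simp
  have ep: "0 < \<epsilon>" using eps by simp
  have ekp: "0 < \<epsilon>k" unfolding ek using Hp by simp
  have c0: "0 < qvi_c" by (simp add: qvi_c_def)
  have alp: "0 \<le> \<alpha>" unfolding al using c0 ep Hp by simp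
  have C0: "0 \<le> C" unfolding C_def using alp c0 ekp Hp by simp
  have S1: "\<And>t s. H \<le> t \<Longrightarrow> V t s = 0"
    and S2: "\<And>t s. t < H \<Longrightarrow> V0 t s \<le> V t s \<and> V t s \<le> r t s (pol s t) + pexp (P t s (pol s t)) (V (Suc t))"
    and S3: "\<And>t s a. t < H \<Longrightarrow> Q t s a \<le> r t s a + pexp (P t s a) (V (Suc t))
         \<and> r t s a + pexp (P t s a) (V (Suc t)) - e (s,a,t) \<le> Q t s a \<and> Q t s a \<le> V t s"
    using S unfolding InvS_def by auto
  have Dev: "vopt P r H t s - V t s \<le> evp P H pis (\<lambda>t s. e (s, pis s t, t)) t s" if "t \<le> H" for t s
  proof (rule evp_super[of 0 H "\<lambda>t s. vopt P r H t s - V t s"])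
    fix t s assume t: "0 \<le> t" "t < H"
    have "vopt P r H t s = r t s (pis s t) + pexp (P t s (pis s t)) (vopt P r H (Suc t))"
      unfolding pis_def by (rule vopt_step) (use t in simp)
    moreover have "r t s (pis s t) + pexp (P t s (pis s t)) (V (Suc t)) - e (s, pis s t, t) \<le> V t s"
      using S3[of t s "pis s t"] t by auto
    moreover have "pexp (P t s (pis s t)) (\<lambda>s'. vopt P r H (Suc t) s' - V (Suc t) s') =
        pexp (P t s (pis s t)) (vopt P r H (Suc t)) - pexp (P t s (pis s t)) (V (Suc t))"
      by (rule pexp_diff)
    ultimately show "vopt P r H t s - V t s \<le> e (s, pis s t, t) + pexp (P t s (pis s t)) (\<lambda>s'. vopt P r H (Suc t) s' - V (Suc t) s')"
      by linarith
  next
    fix s show "vopt P r H H s - V H s \<le> 0" using S1 by simp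
  qed (use that in auto)
  have evb: "evp P H pis (\<lambda>t s. e (s, pis s t, t)) t s \<le> \<epsilon>k / 2" for t s
  proof -
    have "evp P H pis (\<lambda>t s. e (s, pis s t, t)) t s \<le> evp P H pis (\<lambda>t s. (2 * \<alpha> * sqrt 2) * sqrt (vr t s) + C) t s"
    proof (rule evp_mono)
      fix t s assume t: "t < H"
      show "e (s, pis s t, t) \<le> (2 * \<alpha> * sqrt 2) * sqrt (vr t s) + C"
        using E1[OF t, of s "pis s t"] unfolding C_def vr_def pis_def by (simp add: algebra_simps)
    qed
    also have "\<dots> = (2 * \<alpha> * sqrt 2) * evp P H pis (\<lambda>t s. sqrt (vr t s)) t s + real (H - t) * C"
      by (rule evp_affine)
    also have "\<dots> \<le> (2 * \<alpha> * sqrt 2) * (real H * u) + real H * C"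
    proof (rule add_mono)
      show "(2 * \<alpha> * sqrt 2) * evp P H pis (\<lambda>t s. sqrt (vr t s)) t s \<le> (2 * \<alpha> * sqrt 2) * (real H * u)"
        using sqrt_var_sum_bound[of t s] alp unfolding pis_def u_def by (intro mult_left_mono) auto
      show "real (H - t) * C \<le> real H * C" using C0 by (intro mult_right_mono) auto
    qed
    also have "\<dots> = 2 * sqrt 2 * qvi_c * \<epsilon> + 2 * (qvi_c * \<epsilon> / u) * (sqrt 2 * \<epsilon>k + 3) + 2 * qvi_c * \<epsilon>k"
    proof -
      have e1: "\<alpha> * (real H * u) = qvi_c * \<epsilon>" unfolding al u_def using Hp by simp
      have e2: "\<alpha> * real H = qvi_c * \<epsilon> / u" unfolding al u_def using Hp by simp
      have e3: "real H * (qvi_c * \<epsilon>k / real H) = qvi_c * \<epsilon>k" using Hp by simp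
      have "(2 * \<alpha> * sqrt 2) * (real H * u) + real H * C = 2 * sqrt 2 * (\<alpha> * (real H * u)) + 2 * (\<alpha> * real H) * (sqrt 2 * \<epsilon>k + 3) + 2 * (real H * (qvi_c * \<epsilon>k / real H))"
        unfolding C_def by (simp add: algebra_simps)
      also have "\<dots> = 2 * sqrt 2 * (qvi_c * \<epsilon>) + 2 * (qvi_c * \<epsilon> / u) * (sqrt 2 * \<epsilon>k + 3) + 2 * (qvi_c * \<epsilon>k)"
        unfolding e1 e2 e3 ..
      finally show ?thesis by (simp add: algebra_simps)
    qed
    also have "\<dots> \<le> \<epsilon>k / 2" by (rule numeric1[OF u1 eu kK ekp])
    finally show ?thesis .
  qed
  have D: "vopt P r H t s - V t s \<le> \<epsilon>k / 2" if "t \<le> H" for t s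
    using Dev[OF that, of s] evb[of t s] by linarith
  have ek2: "\<epsilon>k / 2 = real H / 2 ^ Suc k" unfolding ek by simp
  have Inv: "InvIn (Suc k) V pol"
    unfolding InvIn_def
  proof (intro conjI allI impI)
    fix t s
    show "H \<le> t \<Longrightarrow> V t s = 0" by (rule S1)
    show "t < H \<Longrightarrow> 0 \<le> V t s" using S2[of t s] InvIn_nonneg[OF inv, of t s] by auto
    show "t < H \<Longrightarrow> V t s \<le> r t s (pol s t) + pexp (P t s (pol s t)) (V (Suc t))" using S2 by auto
    show "t < H \<Longrightarrow> vopt P r H t s - V t s \<le> real H / 2 ^ Suc k" using D[of t s] ek2 by simp
  qed
  have Qp: "Qprop (Suc k) Q V"
    unfolding Qprop_def
  proof (intro conjI allI impI)
    fix t s a assume t: "t < H"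
    show "Q t s a \<le> r t s a + pexp (P t s a) (V (Suc t))" using S3[OF t] by auto
    have pv: "pexp (P t s a) (vopt P r H (Suc t)) - \<epsilon>k / 2 \<le> pexp (P t s a) (V (Suc t))"
    proof -
      have "pexp (P t s a) (\<lambda>s'. vopt P r H (Suc t) s' - \<epsilon>k / 2) \<le> pexp (P t s a) (V (Suc t))"
      proof (rule pexp_mono)
        fix x show "vopt P r H (Suc t) x - \<epsilon>k / 2 \<le> V (Suc t) x" using D[of "Suc t" x] t by simp
      qed
      then show ?thesis by (simp add: pexp_diff)
    qed
    have vb: "sqrt (pvar (P t s a) (vopt P r H (Suc t))) \<le> real H"
    proof -
      have "pvar (P t s a) (vopt P r H (Suc t)) \<le> pexp (P t s a) (\<lambda>x. (vopt P r H (Suc t) x)\<^sup>2)"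
        by (rule pvar_le_sq)
      also have "\<dots> \<le> (real H)\<^sup>2"
      proof (rule pexp_le_const)
        fix x
        have "0 \<le> vopt P r H (Suc t) x" "vopt P r H (Suc t) x \<le> real H"
          using vopt_bounds[of "Suc t" x] by auto
        then show "(vopt P r H (Suc t) x)\<^sup>2 \<le> (real H)\<^sup>2" by (intro power_mono) auto
      qed
      finally show ?thesis by (intro real_le_lsqrt) auto
    qed
    have ekH: "\<epsilon>k \<le> real H" unfolding ek using Hp by (simp add: field_simps)
    have inner: "sqrt 2 * sqrt (pvar (P t s a) (vopt P r H (Suc t))) + sqrt 2 * \<epsilon>k + 3 \<le> 6 * real H"
    proof -
      have "sqrt 2 * sqrt (pvar (P t s a) (vopt P r H (Suc t))) \<le> 3/2 * real H"
        using vb sqrt2_le by (intro mult_mono) (auto simp: pvar_nonneg)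
      moreover have "sqrt 2 * \<epsilon>k \<le> 3/2 * real H" using ekH sqrt2_le ekp by (intro mult_mono) auto
      ultimately show ?thesis using Hp by linarith
    qed
    have eb: "e (s,a,t) \<le> 12 * qvi_c * \<epsilon> + 4 * qvi_c * (real H / 2 ^ Suc k)"
    proof -
      have "e (s,a,t) \<le> 2 * \<alpha> * (6 * real H) + 2 * (qvi_c * \<epsilon>k / real H)"
      proof -
        have "2 * \<alpha> * (sqrt 2 * sqrt (pvar (P t s a) (vopt P r H (Suc t))) + sqrt 2 * \<epsilon>k + 3) \<le> 2 * \<alpha> * (6 * real H)"
          using inner alp by (intro mult_left_mono) auto
        then show ?thesis using E1[OF t, of s a] by linarith
      qed
      also have "2 * \<alpha> * (6 * real H) = 12 * qvi_c * \<epsilon> / u" unfolding al u_def using Hp by simp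
      also have "12 * qvi_c * \<epsilon> / u \<le> 12 * qvi_c * \<epsilon>" using divide_left_mono[of 1 u "12 * qvi_c * \<epsilon>"] u1 c0 ep by simp
      also have "2 * (qvi_c * \<epsilon>k / real H) = 4 * qvi_c * (1 / 2 ^ Suc k)" unfolding ek using Hp by simp
      also have "\<dots> \<le> 4 * qvi_c * (real H / 2 ^ Suc k)" using c0 Hp by (intro mult_left_mono) (auto simp: divide_right_mono)
      finally show ?thesis by simp
    qed
    show "qopt P r H t s a - (real H / 2 ^ Suc k + 4 * qvi_c * (real H / 2 ^ Suc k) + 12 * qvi_c * \<epsilon>) \<le> Q t s a"
      using S3[OF t, of s a] pv eb ek2 unfolding qopt_def by linarith
  qed
  show ?thesis unfolding J_def using Inv Qp by simp
qed

end

lemma y_bounds: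
  fixes m q E1 E2 Hr :: real
  assumes m: "0 \<le> m" "m \<le> Hr" and H1: "1 \<le> Hr" and vq: "0 \<le> q - m\<^sup>2"
    and g2: "\<bar>E2 - q\<bar> < 1" and g1: "\<bar>E1 - m\<bar> < 1 / Hr"
  shows "q - m\<^sup>2 \<le> max (E2 - E1\<^sup>2) 0 + 4" and "max (E2 - E1\<^sup>2) 0 \<le> q - m\<^sup>2 + 3"
proof -
  have iH: "0 < 1 / Hr" "1 / Hr \<le> 1" using H1 by auto
  have mH: "m / Hr \<le> 1" using m H1 by simp
  have mH': "m * (1 / Hr) \<le> 1" using mH by simp
  have "\<bar>E1\<bar> \<le> m + 1 / Hr" using g1 m by linarith
  then have "\<bar>E1\<bar>\<^sup>2 \<le> (m + 1 / Hr)\<^sup>2" by (intro power_mono) (use m H1 in auto)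
  then have "E1\<^sup>2 \<le> (m + 1 / Hr)\<^sup>2" by simp
  also have "\<dots> = m\<^sup>2 + 2 * (m * (1 / Hr)) + (1 / Hr) * (1 / Hr)" by (simp add: power2_eq_square algebra_simps)
  also have "\<dots> \<le> m\<^sup>2 + 2 * 1 + 1 * 1"
  proof -
    have "(1 / Hr) * (1 / Hr) \<le> 1 * 1" using iH by (intro mult_mono) auto
    then show ?thesis using mH' by linarith
  qed
  finally have u: "E1\<^sup>2 \<le> m\<^sup>2 + 3" by simp
  then show "q - m\<^sup>2 \<le> max (E2 - E1\<^sup>2) 0 + 4" using g2 by (simp add: abs_less_iff) linarith
  have l: "m\<^sup>2 - 2 \<le> E1\<^sup>2"
  proof (cases "1 / Hr \<le> m")
    case True
    then have "0 \<le> m - 1 / Hr" "m - 1 / Hr \<le> E1" using g1 by (auto simp: abs_less_iff)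
    then have "(m - 1 / Hr)\<^sup>2 \<le> E1\<^sup>2" by (intro power_mono) auto
    moreover have "(m - 1 / Hr)\<^sup>2 = m\<^sup>2 - 2 * (m * (1 / Hr)) + (1 / Hr) * (1 / Hr)" by (simp add: power2_eq_square algebra_simps)
    moreover have "0 \<le> (1 / Hr) * (1 / Hr)" by simp
    ultimately show ?thesis using mH' by linarith
  next
    case False
    then have m1: "m \<le> 1" using iH by linarith
    have "m * m \<le> 1 * 1" using m1 m by (intro mult_mono) auto
    then have "m\<^sup>2 \<le> 1 * 1" by (simp add: power2_eq_square)
    then show ?thesis by (smt (verit) zero_le_power2)
  qed
  show "max (E2 - E1\<^sup>2) 0 \<le> q - m\<^sup>2 + 3" using l g2 vq by (simp add: abs_less_iff)
qed

lemma powr_15: "1 \<le> x \<Longrightarrow> (x::real) powr (-1.5) = 1 / (x * sqrt x)"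
proof -
  assume x: "1 \<le> x"
  have e: "x powr (1 + 1/2) = x * sqrt x" using x by (subst powr_add) (simp add: powr_half_sqrt)
  have m: "(-1.5::real) = - (1 + 1/2)" by simp
  show ?thesis unfolding m powr_minus e by (simp add: divide_inverse)
qed

lemma sqrt3_le: "0 \<le> a \<Longrightarrow> 0 \<le> b \<Longrightarrow> 0 \<le> c \<Longrightarrow> sqrt (a + b + c) \<le> sqrt a + sqrt b + sqrt c"
  by (smt (verit) sqrt_add_le_add_sqrt)

context qvi_ctx begin

lemma K_facts:
  shows "k < qvi_K H \<epsilon> \<Longrightarrow> \<epsilon> \<le> 2 * (real H / 2 ^ k)"
    and "real H / 2 ^ qvi_K H \<epsilon> \<le> \<epsilon> / 2"
proof -
  have Hp: "1 \<le> real H" using H_pos by simp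
  have ep: "0 < \<epsilon>" using eps by simp
  have "\<epsilon> \<le> sqrt (real H)" using eps by simp
  also have "\<dots> \<le> real H" using Hp by (simp add: real_sqrt_le_iff real_le_lsqrt power2_eq_square)
  finally have eH: "\<epsilon> \<le> real H" .
  define L where "L = log 2 (real H / \<epsilon>)"
  have HeL: "2 powr L = real H / \<epsilon>" unfolding L_def using ep Hp by simp
  have L0: "0 \<le> L" unfolding L_def using eH ep by simp
  define n where "n = nat \<lceil>L\<rceil>"
  have n1: "L \<le> real n" unfolding n_def using L0 by linarith
  have n2: "real n < L + 1" unfolding n_def using L0 by linarith
  have K: "qvi_K H \<epsilon> = n + 1" unfolding qvi_K_def n_def L_def ..
  have p1: "real H / \<epsilon> \<le> 2 ^ n"
  proof -
    have "2 powr L \<le> 2 powr (real n)" using n1 by simp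
    then show ?thesis using HeL by (simp add: powr_realpow)
  qed
  have p2: "2 ^ n < 2 * (real H / \<epsilon>)"
  proof -
    have "2 powr (real n) < 2 powr (L + 1)" using n2 by simp
    moreover have "2 powr (L + 1) = 2 * (real H / \<epsilon>)" using HeL by (simp add: powr_add)
    ultimately show ?thesis by (simp add: powr_realpow)
  qed
  show "real H / 2 ^ qvi_K H \<epsilon> \<le> \<epsilon> / 2"
    using p1 ep unfolding K by (simp add: field_simps)
  assume "k < qvi_K H \<epsilon>"
  then have "k \<le> n" unfolding K by simp
  then have "(2::real) ^ k \<le> 2 ^ n" by (simp add: power_increasing)
  then have "2 ^ k < 2 * (real H / \<epsilon>)" by (rule order_le_less_trans[OF _ p2])
  then show "\<epsilon> \<le> 2 * (real H / 2 ^ k)" using ep by (simp add: field_simps)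
qed

definition yv :: "('s \<times> 'a \<times> nat \<Rightarrow> real) \<Rightarrow> ('s \<times> 'a \<times> nat \<Rightarrow> real) \<Rightarrow> 's \<times> 'a \<times> nat \<Rightarrow> real" where
  "yv E2 E1 i = max (E2 i - (E1 i)\<^sup>2) 0"

definition etv :: "('s \<times> 'a \<times> nat \<Rightarrow> real) \<Rightarrow> ('s \<times> 'a \<times> nat \<Rightarrow> real) \<Rightarrow> 's \<times> 'a \<times> nat \<Rightarrow> real" where
  "etv E2 E1 i = qvi_c * \<epsilon> * real H powr (-1.5) * sqrt (yv E2 E1 i + 4 * qvi_b)"

lemma qvi_iter_eq:
  "qvi_iter qme1 qme2 P r H \<epsilon> \<zeta> k (V0, pi0, Q0) =
   Pi_pmf (UNIV \<times> UNIV \<times> {..<H}) 0 (\<lambda>(s,a,h). qme1 (P h s a) (\<lambda>s'. (V0 (Suc h) s')\<^sup>2) ((real H)\<^sup>2) qvi_b \<zeta>) \<bind>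
   (\<lambda>E2. Pi_pmf (UNIV \<times> UNIV \<times> {..<H}) 0 (\<lambda>(s,a,h). qme1 (P h s a) (V0 (Suc h)) (real H) (qvi_b / real H) \<zeta>) \<bind>
   (\<lambda>E1. Pi_pmf (UNIV \<times> UNIV \<times> {..<H}) 0 (\<lambda>(s,a,h). qme2 (P h s a) (V0 (Suc h))
                              (sqrt (yv E2 E1 (s,a,h) + 4 * qvi_b)) (etv E2 E1 (s,a,h)) \<zeta>) \<bind>
   (\<lambda>X. foldl (\<lambda>M h. M \<bind> qvi_step qme1 P r H (real H / 2 ^ k) \<zeta> V0 pi0 (\<lambda>i. X i - etv E2 E1 i) h)
              (return_pmf ((\<lambda>_ _. 0), pi0, (\<lambda>_ _ _. 0)))
              (rev [0..<H]))))"
  unfolding qvi_iter_def Let_def yv_def etv_def prod.case ..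

lemma V0_bounds: "InvIn k V0 pi0 \<Longrightarrow> 0 \<le> V0 t s \<and> V0 t s \<le> real H"
  using InvIn_nonneg[of k V0 pi0 t s] InvIn_le_vopt[of k V0 pi0 t s] vopt_bounds[of t s] by auto

lemma yb_inst:
  assumes inv: "InvIn k V0 pi0"
    and g2: "\<bar>E2 - pexp p (\<lambda>s'. (V0 t s')\<^sup>2)\<bar> < 1" and g1: "\<bar>E1 - pexp p (V0 t)\<bar> < 1 / real H"
  shows "pvar p (V0 t) \<le> max (E2 - E1\<^sup>2) 0 + 4 \<and> max (E2 - E1\<^sup>2) 0 \<le> pvar p (V0 t) + 3"
proof -
  have m0: "0 \<le> pexp p (V0 t)" by (rule pexp_nonneg) (use V0_bounds[OF inv] in blast)
  have m1: "pexp p (V0 t) \<le> real H" by (rule pexp_le_const) (use V0_bounds[OF inv] in blast)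
  have H1: "1 \<le> real H" using H_pos by simp
  have vq: "0 \<le> pexp p (\<lambda>s'. (V0 t s')\<^sup>2) - (pexp p (V0 t))\<^sup>2"
    using pvar_nonneg[of p "V0 t"] pvar_alt[of p "V0 t"] by simp
  show ?thesis using y_bounds[OF m0 m1 H1 vq g2 g1] pvar_alt[of p "V0 t"] by simp
qed

lemma pvar_V0:
  assumes inv: "InvIn k V0 pi0"
  shows "pvar p (V0 t) \<le> 2 * pvar p (vopt P r H t) + 2 * (real H / 2 ^ k)\<^sup>2"
proof -
  define g where "g = (\<lambda>x. V0 t x - vopt P r H t x)"
  have "pvar p (V0 t) = pvar p (\<lambda>x. vopt P r H t x + g x)" unfolding g_def by simp
  also have "\<dots> \<le> 2 * pvar p (vopt P r H t) + 2 * pvar p g" by (rule pvar_sum_le)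
  also have "pvar p g \<le> (real H / 2 ^ k)\<^sup>2"
  proof -
    have "pvar p g \<le> pexp p (\<lambda>x. (g x)\<^sup>2)" by (rule pvar_le_sq)
    also have "\<dots> \<le> (real H / 2 ^ k)\<^sup>2"
    proof (rule pexp_le_const)
      fix x
      have "\<bar>g x\<bar> \<le> real H / 2 ^ k" using InvIn_gap[OF inv, of t x] unfolding g_def by auto
      then have "\<bar>g x\<bar>\<^sup>2 \<le> (real H / 2 ^ k)\<^sup>2" by (intro power_mono) auto
      then show "(g x)\<^sup>2 \<le> (real H / 2 ^ k)\<^sup>2" by simp
    qed
    finally show ?thesis .
  qed
  finally show ?thesis by simp
qed

lemma sqrt7: "sqrt 7 \<le> 3"
  by (rule real_le_lsqrt) (auto simp: power2_eq_square)

lemma etv_bound: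
  assumes inv: "InvIn k V0 pi0"
    and g2: "\<bar>E2 (s,a,t) - pexp p (\<lambda>s'. (V0 (Suc t) s')\<^sup>2)\<bar> < 1" and g1: "\<bar>E1 (s,a,t) - pexp p (V0 (Suc t))\<bar> < 1 / real H"
  shows "etv E2 E1 (s,a,t) \<le> (qvi_c * \<epsilon> / (real H * sqrt (real H))) *
           (sqrt 2 * sqrt (pvar p (vopt P r H (Suc t))) + sqrt 2 * (real H / 2 ^ k) + 3)"
proof -
  define pv where "pv = pvar p (vopt P r H (Suc t))"
  define ek where "ek = real H / 2 ^ k"
  have H1: "1 \<le> real H" using H_pos by simp
  have pv0: "0 \<le> pv" unfolding pv_def by (rule pvar_nonneg)
  have ek0: "0 \<le> ek" unfolding ek_def by simp
  have y: "yv E2 E1 (s,a,t) \<le> pvar p (V0 (Suc t)) + 3"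
    using yb_inst[OF inv g2 g1] unfolding yv_def by simp
  have "yv E2 E1 (s,a,t) + 4 * qvi_b \<le> 2 * pv + 2 * ek\<^sup>2 + 7"
    using y pvar_V0[OF inv, of p "Suc t"] unfolding pv_def ek_def qvi_b_def by simp
  then have "sqrt (yv E2 E1 (s,a,t) + 4 * qvi_b) \<le> sqrt (2 * pv + 2 * ek\<^sup>2 + 7)" by simp
  also have "\<dots> \<le> sqrt (2 * pv) + sqrt (2 * ek\<^sup>2) + sqrt 7" by (rule sqrt3_le) (use pv0 in auto)
  also have "\<dots> \<le> sqrt 2 * sqrt pv + sqrt 2 * ek + 3" using sqrt7 ek0 by (simp add: real_sqrt_mult)
  finally have sq: "sqrt (yv E2 E1 (s,a,t) + 4 * qvi_b) \<le> sqrt 2 * sqrt pv + sqrt 2 * ek + 3" .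
  have al0: "0 \<le> qvi_c * \<epsilon> / (real H * sqrt (real H))" using eps H1 by (simp add: qvi_c_def)
  have "etv E2 E1 (s,a,t) = (qvi_c * \<epsilon> / (real H * sqrt (real H))) * sqrt (yv E2 E1 (s,a,t) + 4 * qvi_b)"
    unfolding etv_def using powr_15[OF H1] by simp
  also have "\<dots> \<le> (qvi_c * \<epsilon> / (real H * sqrt (real H))) * (sqrt 2 * sqrt pv + sqrt 2 * ek + 3)"
    by (rule mult_left_mono[OF sq al0])
  finally show ?thesis unfolding pv_def ek_def .
qed

lemma iter_prob:
  assumes inv: "InvIn k V0 pi0" and kK: "k < qvi_K H \<epsilon>" and z: "0 < \<zeta>"
  shows "measure_pmf.prob (qvi_iter qme1 qme2 P r H \<epsilon> \<zeta> k (V0, pi0, Q0)) {st. \<not> J (Suc k) st}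
     \<le> 4 * (real (card (UNIV \<times> UNIV \<times> {..<H} :: ('s \<times> 'a \<times> nat) set)) * \<zeta>)"
proof -
  define I where "I = (UNIV \<times> UNIV \<times> {..<H} :: ('s \<times> 'a \<times> nat) set)"
  define N where "N = real (card I)"
  define ek where "ek = real H / 2 ^ k"
  define al where "al = qvi_c * \<epsilon> / (real H * sqrt (real H))"
  have finI: "finite I" unfolding I_def by simp
  have H1: "1 \<le> real H" using H_pos by simp
  have ep: "0 < \<epsilon>" using eps by simp
  have N0: "0 \<le> N * \<zeta>" unfolding N_def using z by simp
  have NH: "real H * (real CARD('s \<times> 'a) * \<zeta>) = N * \<zeta>"
    unfolding N_def I_def by (simp add: card_cartesian_product)
  have V0b: "\<And>t s. 0 \<le> V0 t s \<and> V0 t s \<le> real H" by (rule V0_bounds[OF inv])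
  define G2 where "G2 = (\<lambda>(i::'s \<times> 'a \<times> nat) e. case i of (s,a,h) \<Rightarrow> \<bar>e - pexp (P h s a) (\<lambda>s'. (V0 (Suc h) s')\<^sup>2)\<bar> < qvi_b)"
  define G1 where "G1 = (\<lambda>(i::'s \<times> 'a \<times> nat) e. case i of (s,a,h) \<Rightarrow> \<bar>e - pexp (P h s a) (V0 (Suc h))\<bar> < qvi_b / real H)"
  define GX where "GX = (\<lambda>E2 E1 (i::'s \<times> 'a \<times> nat) e. case i of (s,a,h) \<Rightarrow> \<bar>e - pexp (P h s a) (V0 (Suc h))\<bar> < etv E2 E1 (s,a,h))"
  have P2: "measure_pmf.prob (Pi_pmf I 0 (\<lambda>(s,a,h). qme1 (P h s a) (\<lambda>s'. (V0 (Suc h) s')\<^sup>2) ((real H)\<^sup>2) qvi_b \<zeta>))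
      {E2. \<not> (\<forall>i\<in>I. G2 i (E2 i))} \<le> real (card I) * \<zeta>"
  proof (rule Pi_pmf_fail[OF finI])
    fix i assume "i \<in> I"
    obtain s a h where i: "i = (s,a,h)" by (cases i) auto
    have rng: "\<forall>x. 0 \<le> (V0 (Suc h) x)\<^sup>2 \<and> (V0 (Suc h) x)\<^sup>2 \<le> (real H)\<^sup>2"
      using V0b by (auto intro: power_mono)
    have "measure_pmf.prob (qme1 (P h s a) (\<lambda>s'. (V0 (Suc h) s')\<^sup>2) ((real H)\<^sup>2) qvi_b \<zeta>)
        {e. \<bar>e - pexp (P h s a) (\<lambda>s'. (V0 (Suc h) s')\<^sup>2)\<bar> < qvi_b} > 1 - \<zeta>"
      using q1 rng z unfolding QME1_spec_def qvi_b_def by auto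
    then show "measure_pmf.prob ((\<lambda>(s,a,h). qme1 (P h s a) (\<lambda>s'. (V0 (Suc h) s')\<^sup>2) ((real H)\<^sup>2) qvi_b \<zeta>) i)
        {e. \<not> G2 i e} \<le> \<zeta>"
      unfolding i G2_def by (simp add: prob_not)
  qed
  have P1: "measure_pmf.prob (Pi_pmf I 0 (\<lambda>(s,a,h). qme1 (P h s a) (V0 (Suc h)) (real H) (qvi_b / real H) \<zeta>))
      {E1. \<not> (\<forall>i\<in>I. G1 i (E1 i))} \<le> real (card I) * \<zeta>"
  proof (rule Pi_pmf_fail[OF finI])
    fix i assume "i \<in> I"
    obtain s a h where i: "i = (s,a,h)" by (cases i) auto
    have "measure_pmf.prob (qme1 (P h s a) (V0 (Suc h)) (real H) (qvi_b / real H) \<zeta>)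
        {e. \<bar>e - pexp (P h s a) (V0 (Suc h))\<bar> < qvi_b / real H} > 1 - \<zeta>"
      using q1 V0b z H1 unfolding QME1_spec_def qvi_b_def by auto
    then show "measure_pmf.prob ((\<lambda>(s,a,h). qme1 (P h s a) (V0 (Suc h)) (real H) (qvi_b / real H) \<zeta>) i)
        {e. \<not> G1 i e} \<le> \<zeta>"
      unfolding i G1_def by (simp add: prob_not)
  qed
  have PX: "measure_pmf.prob (Pi_pmf I 0 (\<lambda>(s,a,h). qme2 (P h s a) (V0 (Suc h))
                              (sqrt (yv E2 E1 (s,a,h) + 4 * qvi_b)) (etv E2 E1 (s,a,h)) \<zeta>))
      {X. \<not> (\<forall>i\<in>I. GX E2 E1 i (X i))} \<le> real (card I) * \<zeta>"
    if g2: "\<forall>i\<in>I. G2 i (E2 i)" and g1: "\<forall>i\<in>I. G1 i (E1 i)" for E2 E1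
  proof (rule Pi_pmf_fail[OF finI])
    fix i assume iI: "i \<in> I"
    obtain s a h where i: "i = (s,a,h)" by (cases i) auto
    define \<sigma> where "\<sigma> = sqrt (yv E2 E1 (s,a,h) + 4 * qvi_b)"
    have y0: "0 \<le> yv E2 E1 (s,a,h)" unfolding yv_def by simp
    have sp: "0 < \<sigma>" unfolding \<sigma>_def qvi_b_def using y0 by simp
    have ss: "\<sigma>\<^sup>2 = yv E2 E1 (s,a,h) + 4" unfolding \<sigma>_def qvi_b_def using y0 by simp
    have a2: "\<bar>E2 (s,a,h) - pexp (P h s a) (\<lambda>s'. (V0 (Suc h) s')\<^sup>2)\<bar> < 1"
      using g2 iI unfolding i G2_def qvi_b_def by fastforce
    have a1: "\<bar>E1 (s,a,h) - pexp (P h s a) (V0 (Suc h))\<bar> < 1 / real H"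
      using g1 iI unfolding i G1_def qvi_b_def by fastforce
    have var: "pvar (P h s a) (V0 (Suc h)) \<le> \<sigma>\<^sup>2"
      using yb_inst[OF inv a2 a1] unfolding ss yv_def by simp
    have alle: "qvi_c * \<epsilon> * real H powr (-1.5) \<le> qvi_c"
    proof -
      have "qvi_c * \<epsilon> * real H powr (-1.5) = qvi_c * (\<epsilon> / (real H * sqrt (real H)))" using powr_15[OF H1] by simp
      also have "\<epsilon> / (real H * sqrt (real H)) \<le> 1"
      proof -
        have "\<epsilon> \<le> sqrt (real H)" using eps by simp
        also have "\<dots> \<le> real H * sqrt (real H)" using H1 by simp
        finally show ?thesis using H1 by simp
      qed
      then have "qvi_c * (\<epsilon> / (real H * sqrt (real H))) \<le> qvi_c * 1" by (intro mult_left_mono) (auto simp: qvi_c_def)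
      finally show ?thesis by simp
    qed
    have apos: "0 < qvi_c * \<epsilon> * real H powr (-1.5)" using ep H1 by (simp add: qvi_c_def)
    have et: "etv E2 E1 (s,a,h) = (qvi_c * \<epsilon> * real H powr (-1.5)) * \<sigma>" unfolding etv_def \<sigma>_def by simp
    have etp: "0 < etv E2 E1 (s,a,h)" unfolding et using apos sp by simp
    have etl: "etv E2 E1 (s,a,h) < 4 * \<sigma>"
    proof -
      have "etv E2 E1 (s,a,h) \<le> qvi_c * \<sigma>" unfolding et using alle sp by (intro mult_right_mono) auto
      also have "\<dots> < 4 * \<sigma>" using sp by (simp add: qvi_c_def)
      finally show ?thesis .
    qed
    have "measure_pmf.prob (qme2 (P h s a) (V0 (Suc h)) \<sigma> (etv E2 E1 (s,a,h)) \<zeta>)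
        {e. \<bar>e - pexp (P h s a) (V0 (Suc h))\<bar> < etv E2 E1 (s,a,h)} > 1 - \<zeta>"
      using q2 var etp etl z unfolding QME2_spec_def by blast
    then show "measure_pmf.prob ((\<lambda>(s,a,h). qme2 (P h s a) (V0 (Suc h))
                              (sqrt (yv E2 E1 (s,a,h) + 4 * qvi_b)) (etv E2 E1 (s,a,h)) \<zeta>) i)
        {e. \<not> GX E2 E1 i e} \<le> \<zeta>"
      unfolding i GX_def by (simp add: prob_not \<sigma>_def)
  qed
  have PL: "measure_pmf.prob (foldl (\<lambda>M h. M \<bind> qvi_step qme1 P r H (real H / 2 ^ k) \<zeta> V0 pi0 (\<lambda>i. X i - etv E2 E1 i) h)
              (return_pmf ((\<lambda>_ _. 0), pi0, (\<lambda>_ _ _. 0))) (rev [0..<H])) {st. \<not> J (Suc k) st} \<le> N * \<zeta>"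
    if g2: "\<forall>i\<in>I. G2 i (E2 i)" and g1: "\<forall>i\<in>I. G1 i (E1 i)" and gx: "\<forall>i\<in>I. GX E2 E1 i (X i)" for E2 E1 X
  proof -
    define e where "e = (\<lambda>i. 2 * etv E2 E1 i + 2 * (qvi_c * ek / real H))"
    have xb: "pexp (P t s a) (V0 (Suc t)) - 2 * etv E2 E1 (s,a,t) \<le> X (s,a,t) - etv E2 E1 (s,a,t) \<and>
              X (s,a,t) - etv E2 E1 (s,a,t) \<le> pexp (P t s a) (V0 (Suc t))" if t: "t < H" for s a t
    proof -
      have "(s,a,t) \<in> I" unfolding I_def using t by simp
      then have "\<bar>X (s,a,t) - pexp (P t s a) (V0 (Suc t))\<bar> < etv E2 E1 (s,a,t)" using gx unfolding GX_def by force
      then show ?thesis by (auto simp: abs_less_iff)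
    qed
    have IP: "measure_pmf.prob (foldl (\<lambda>M h. M \<bind> qvi_step qme1 P r H ek \<zeta> V0 pi0 (\<lambda>i. X i - etv E2 E1 i) h)
            (return_pmf ((\<lambda>_ _. 0), pi0, (\<lambda>_ _ _. 0))) (rev [H - H..<H])) {st. \<not> InvS V0 e (H - H) st}
         \<le> real H * (real CARD('s \<times> 'a) * \<zeta>)"
    proof -
      have ed: "\<And>s a t. e (s,a,t) = 2 * etv E2 E1 (s,a,t) + 2 * (qvi_c * ek / real H)" by (simp add: e_def)
      show ?thesis
        using inner_prob[of k V0 pi0 "\<lambda>i. 2 * etv E2 E1 i" "\<lambda>i. X i - etv E2 E1 i" e ek \<zeta> H, OF inv xb ed ek_def z]
        by simp
    qed
    have sub: "{st. \<not> J (Suc k) st} \<subseteq> {st. \<not> InvS V0 e 0 st}"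
    proof (safe)
      fix V pol Q assume S: "InvS V0 e 0 (V, pol, Q)" and nJ: "\<not> J (Suc k) (V, pol, Q)"
      have "J (Suc k) (V, pol, Q)"
      proof (rule final_of_InvS[OF inv S _ _ refl refl])
        show "\<epsilon> \<le> 2 * (real H / 2 ^ k)" by (rule K_facts(1)[OF kK])
        fix s a t assume t: "t < H"
        have iI: "(s,a,t) \<in> I" unfolding I_def using t by simp
        have "etv E2 E1 (s,a,t) \<le> (qvi_c * \<epsilon> / (real H * sqrt (real H))) *
           (sqrt 2 * sqrt (pvar (P t s a) (vopt P r H (Suc t))) + sqrt 2 * (real H / 2 ^ k) + 3)"
          by (rule etv_bound[OF inv]) (use g2 g1 iI in \<open>auto simp: G2_def G1_def qvi_b_def\<close>)
        then show "e (s, a, t) \<le> 2 * (qvi_c * \<epsilon> / (real H * sqrt (real H))) *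
           (sqrt 2 * sqrt (pvar (P t s a) (vopt P r H (Suc t))) + sqrt 2 * (real H / 2 ^ k) + 3) +
           2 * (qvi_c * (real H / 2 ^ k) / real H)"
          unfolding e_def ek_def by simp
      qed
      then show False using nJ by simp
    qed
    have "measure_pmf.prob (foldl (\<lambda>M h. M \<bind> qvi_step qme1 P r H (real H / 2 ^ k) \<zeta> V0 pi0 (\<lambda>i. X i - etv E2 E1 i) h)
              (return_pmf ((\<lambda>_ _. 0), pi0, (\<lambda>_ _ _. 0))) (rev [0..<H])) {st. \<not> J (Suc k) st}
       \<le> measure_pmf.prob (foldl (\<lambda>M h. M \<bind> qvi_step qme1 P r H (real H / 2 ^ k) \<zeta> V0 pi0 (\<lambda>i. X i - etv E2 E1 i) h)
              (return_pmf ((\<lambda>_ _. 0), pi0, (\<lambda>_ _ _. 0))) (rev [0..<H])) {st. \<not> InvS V0 e 0 st}"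
      by (rule measure_pmf.finite_measure_mono[OF sub]) simp
    also have "\<dots> \<le> N * \<zeta>" using IP[unfolded NH] unfolding ek_def by simp
    finally show ?thesis .
  qed
  have "measure_pmf.prob (qvi_iter qme1 qme2 P r H \<epsilon> \<zeta> k (V0, pi0, Q0)) {st. \<not> J (Suc k) st} \<le> N * \<zeta> + (N * \<zeta> + (N * \<zeta> + N * \<zeta>))"
    unfolding qvi_iter_eq I_def[symmetric]
  proof (rule prob_bind_fail[OF P2[folded N_def]])
    fix E2 assume g2: "\<forall>i\<in>I. G2 i (E2 i)"
    show "measure_pmf.prob (Pi_pmf I 0 (\<lambda>(s,a,h). qme1 (P h s a) (V0 (Suc h)) (real H) (qvi_b / real H) \<zeta>) \<bind>
   (\<lambda>E1. Pi_pmf I 0 (\<lambda>(s,a,h). qme2 (P h s a) (V0 (Suc h))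
                              (sqrt (yv E2 E1 (s,a,h) + 4 * qvi_b)) (etv E2 E1 (s,a,h)) \<zeta>) \<bind>
   (\<lambda>X. foldl (\<lambda>M h. M \<bind> qvi_step qme1 P r H (real H / 2 ^ k) \<zeta> V0 pi0 (\<lambda>i. X i - etv E2 E1 i) h)
              (return_pmf ((\<lambda>_ _. 0), pi0, (\<lambda>_ _ _. 0)))
              (rev [0..<H])))) {st. \<not> J (Suc k) st} \<le> N * \<zeta> + (N * \<zeta> + N * \<zeta>)"
    proof (rule prob_bind_fail[OF P1[folded N_def]])
      fix E1 assume g1: "\<forall>i\<in>I. G1 i (E1 i)"
      show "measure_pmf.prob (Pi_pmf I 0 (\<lambda>(s,a,h). qme2 (P h s a) (V0 (Suc h))
                              (sqrt (yv E2 E1 (s,a,h) + 4 * qvi_b)) (etv E2 E1 (s,a,h)) \<zeta>) \<bind>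
   (\<lambda>X. foldl (\<lambda>M h. M \<bind> qvi_step qme1 P r H (real H / 2 ^ k) \<zeta> V0 pi0 (\<lambda>i. X i - etv E2 E1 i) h)
              (return_pmf ((\<lambda>_ _. 0), pi0, (\<lambda>_ _ _. 0)))
              (rev [0..<H]))) {st. \<not> J (Suc k) st} \<le> N * \<zeta> + N * \<zeta>"
      proof (rule prob_bind_fail[OF PX[OF g2 g1, folded N_def]])
        fix X assume gx: "\<forall>i\<in>I. GX E2 E1 i (X i)"
        show "measure_pmf.prob (foldl (\<lambda>M h. M \<bind> qvi_step qme1 P r H (real H / 2 ^ k) \<zeta> V0 pi0 (\<lambda>i. X i - etv E2 E1 i) h)
              (return_pmf ((\<lambda>_ _. 0), pi0, (\<lambda>_ _ _. 0)))
              (rev [0..<H])) {st. \<not> J (Suc k) st} \<le> N * \<zeta>"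
          by (rule PL[OF g2 g1 gx])
      qed (rule N0)
    qed (use N0 in simp)
  qed (use N0 in simp)
  then show ?thesis unfolding N_def I_def by (simp add: mult_ac)
qed

end

context qvi_ctx begin

lemma J0: "J 0 ((\<lambda>_ _. 0), pi_init, (\<lambda>_ _ _. 0))"
  unfolding J_def InvIn_def prod.case
proof (intro conjI allI impI)
  fix t s
  assume t: "t < H"
  show "0 \<le> r t s (pi_init s t) + pexp (P t s (pi_init s t)) ((\<lambda>_ _. 0) (Suc t))"
    using rew[OF t, of s "pi_init s t"] by simp
  have "vopt P r H t s \<le> real (H - t)" using vopt_bounds[of t s] by simp
  also have "\<dots> \<le> real H" by simp
  finally show "vopt P r H t s - (\<lambda>_ _. 0) t s \<le> real H / 2 ^ 0" by simp
qed simp_all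

lemma InvIn_le_Vpi:
  assumes "InvIn k V pol" "t \<le> H"
  shows "V t s \<le> Vpi P r H pol t s"
proof -
  have "V t s \<le> evp P H pol (\<lambda>t s. r t s (pol s t)) t s"
    apply (rule evp_super[of 0])
    using assms by (auto simp: InvIn_def)
  then show ?thesis by (simp add: Vpi_evp)
qed

lemma J_final:
  assumes JK: "J (qvi_K H \<epsilon>) (V, pol, Q)" and h: "h < H"
  shows "Vstar P r H h s - \<epsilon> \<le> V h s \<and> V h s \<le> Vpi P r H pol h s
              \<and> Vpi P r H pol h s \<le> Vstar P r H h s
              \<and> (\<forall>a. Qstar P r H h s a - \<epsilon> \<le> Q h s a \<and> Q h s a \<le> Qpi P r H pol h s a
                     \<and> Qpi P r H pol h s a \<le> Qstar P r H h s a)"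
proof -
  define K where "K = qvi_K H \<epsilon>"
  have K0: "0 < K" unfolding K_def qvi_K_def by simp
  have inv: "InvIn K V pol" and qp: "Qprop K Q V" using JK K0 unfolding J_def K_def by auto
  have KK: "real H / 2 ^ K \<le> \<epsilon> / 2" unfolding K_def by (rule K_facts(2))
  have ep: "0 < \<epsilon>" using eps by simp
  have c: "qvi_c = 1/1000" by (simp add: qvi_c_def)
  have a1: "Vstar P r H h s - \<epsilon> \<le> V h s"
  proof -
    have "vopt P r H h s - V h s \<le> real H / 2 ^ K" using inv h unfolding InvIn_def by blast
    then show ?thesis using KK ep unfolding Vstar_eq by linarith
  qed
  have a2: "V h s \<le> Vpi P r H pol h s" using InvIn_le_Vpi[OF inv] h by simp
  have a3: "Vpi P r H pol h s \<le> Vstar P r H h s" by (simp add: Vstar_eq Vpi_le_vopt)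
  have a4: "Qstar P r H h s a - \<epsilon> \<le> Q h s a \<and> Q h s a \<le> Qpi P r H pol h s a
                     \<and> Qpi P r H pol h s a \<le> Qstar P r H h s a" for a
  proof (intro conjI)
    have q: "Q h s a \<le> r h s a + pexp (P h s a) (V (Suc h))"
      "qopt P r H h s a - (real H / 2 ^ K + 4 * qvi_c * (real H / 2 ^ K) + 12 * qvi_c * \<epsilon>) \<le> Q h s a"
      using qp h unfolding Qprop_def by auto
    have b: "real H / 2 ^ K + 4 * qvi_c * (real H / 2 ^ K) + 12 * qvi_c * \<epsilon> \<le> \<epsilon>"
      using KK ep unfolding c by simp
    show "Qstar P r H h s a - \<epsilon> \<le> Q h s a" using q(2) b by (simp add: Qstar_eq)
    have "pexp (P h s a) (V (Suc h)) \<le> pexp (P h s a) (Vpi P r H pol (Suc h))"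
      by (rule pexp_mono) (rule InvIn_le_Vpi[OF inv], use h in simp)
    then show "Q h s a \<le> Qpi P r H pol h s a" using q(1) by (simp add: Qpi_def pexp_def)
    show "Qpi P r H pol h s a \<le> Qstar P r H h s a" by (simp add: Qstar_eq Qpi_le_qopt)
  qed
  show ?thesis using a1 a2 a3 a4 by blast
qed

lemma outer_prob:
  assumes z: "0 < \<zeta>"
  shows "n \<le> qvi_K H \<epsilon> \<Longrightarrow> measure_pmf.prob (foldl (\<lambda>M k. M \<bind> qvi_iter qme1 qme2 P r H \<epsilon> \<zeta> k)
            (return_pmf ((\<lambda>_ _. 0), pi_init, (\<lambda>_ _ _. 0))) [0..<n]) {st. \<not> J n st}
     \<le> real n * (4 * (real (card (UNIV \<times> UNIV \<times> {..<H} :: ('s \<times> 'a \<times> nat) set)) * \<zeta>))"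
proof (induction n)
  case 0
  then show ?case using J0[of pi_init] by (simp add: prob_return_ok)
next
  case (Suc n)
  define N where "N = 4 * (real (card (UNIV \<times> UNIV \<times> {..<H} :: ('s \<times> 'a \<times> nat) set)) * \<zeta>)"
  have N0: "0 \<le> N" unfolding N_def using z by simp
  have IH: "measure_pmf.prob (foldl (\<lambda>M k. M \<bind> qvi_iter qme1 qme2 P r H \<epsilon> \<zeta> k)
            (return_pmf ((\<lambda>_ _. 0), pi_init, (\<lambda>_ _ _. 0))) [0..<n]) {st. \<not> J n st} \<le> real n * N"
    using Suc unfolding N_def by simp
  have "measure_pmf.prob (foldl (\<lambda>M k. M \<bind> qvi_iter qme1 qme2 P r H \<epsilon> \<zeta> k)
            (return_pmf ((\<lambda>_ _. 0), pi_init, (\<lambda>_ _ _. 0))) [0..<n] \<bind> qvi_iter qme1 qme2 P r H \<epsilon> \<zeta> n)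
            {st. \<not> J (Suc n) st} \<le> real n * N + N"
  proof (rule prob_bind_fail[OF IH _ N0])
    fix st assume A: "J n st"
    obtain V0 pi0 Q0 where st: "st = (V0, pi0, Q0)" by (cases st) auto
    have inv: "InvIn n V0 pi0" using A st unfolding J_def by simp
    show "measure_pmf.prob (qvi_iter qme1 qme2 P r H \<epsilon> \<zeta> n st) {st. \<not> J (Suc n) st} \<le> N"
      unfolding st N_def by (rule iter_prob[OF inv _ z]) (use Suc.prems in simp)
  qed
  then show ?case unfolding N_def by (simp add: algebra_simps)
qed

end

theorem theorem4p5:
  fixes P :: "nat \<Rightarrow> 's::finite \<Rightarrow> 'a::finite \<Rightarrow> 's pmf"
    and r :: "nat \<Rightarrow> 's \<Rightarrow> 'a \<Rightarrow> real"
    and H :: nat and \<epsilon> \<delta> :: real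
    and qme1 qme2 :: "'s qme"
    and pi_init :: "'s \<Rightarrow> nat \<Rightarrow> 'a"
  assumes rew: "\<And>h s a. h < H \<Longrightarrow> 0 \<le> r h s a \<and> r h s a \<le> 1"
    and eps: "0 < \<epsilon>" "\<epsilon> \<le> sqrt (real H)"
    and del: "0 < \<delta>" "\<delta> < 1"
    and q1: "QME1_spec qme1"
    and q2: "QME2_spec qme2"
  shows "measure_pmf.prob (QVI4 qme1 qme2 P r H pi_init \<epsilon> \<delta>)
           {(V, pol, Q). \<forall>h<H. \<forall>s.
              Vstar P r H h s - \<epsilon> \<le> V h s \<and> V h s \<le> Vpi P r H pol h s
              \<and> Vpi P r H pol h s \<le> Vstar P r H h s
              \<and> (\<forall>a. Qstar P r H h s a - \<epsilon> \<le> Q h s a \<and> Q h s a \<le> Qpi P r H pol h s a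
                     \<and> Qpi P r H pol h s a \<le> Qstar P r H h s a)}
         \<ge> 1 - \<delta>"
proof -
  interpret qvi_ctx P r H \<epsilon> \<delta> qme1 qme2
    by unfold_locales (use rew eps del q1 q2 in auto)
  define K where "K = qvi_K H \<epsilon>"
  define \<zeta> where "\<zeta> = qvi_zeta TYPE('s) TYPE('a) H \<epsilon> \<delta>"
  define N where "N = real (card (UNIV \<times> UNIV \<times> {..<H} :: ('s \<times> 'a \<times> nat) set))"
  have N: "N = real CARD('s) * real CARD('a) * real H" unfolding N_def by (simp add: card_cartesian_product)
  have K1: "1 \<le> real K" unfolding K_def qvi_K_def by simp
  have H1: "1 \<le> real H" using H_pos by simp
  have S1: "1 \<le> real CARD('s)" using finite_UNIV_card_ge_0[where 'a='s] by simp
  have A1: "1 \<le> real CARD('a)" using finite_UNIV_card_ge_0[where 'a='a] by simp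
  have pos: "0 < 4 * real K * real H * real CARD('s) * real CARD('a)" using K1 H1 S1 A1 by simp
  have zdef: "\<zeta> = \<delta> / (4 * real K * real H * real CARD('s) * real CARD('a))"
    unfolding \<zeta>_def qvi_zeta_def K_def ..
  have z: "0 < \<zeta>" unfolding zdef using pos del by simp
  have KN: "real K * (4 * (N * \<zeta>)) = \<delta>"
  proof -
    define D where "D = 4 * real K * real H * real CARD('s) * real CARD('a)"
    have e1: "real K * (4 * (N * \<zeta>)) = D * \<zeta>" unfolding D_def N by (simp add: algebra_simps)
    have D0: "D \<noteq> 0" unfolding D_def using pos by linarith
    have "D * \<zeta> = \<delta>" unfolding zdef D_def[symmetric] using D0 by simp
    then show ?thesis using e1 by simp
  qed
  have Q: "QVI4 qme1 qme2 P r H pi_init \<epsilon> \<delta> = foldl (\<lambda>M k. M \<bind> qvi_iter qme1 qme2 P r H \<epsilon> \<zeta> k)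
            (return_pmf ((\<lambda>_ _. 0), pi_init, (\<lambda>_ _ _. 0))) [0..<K]"
    unfolding QVI4_def Let_def \<zeta>_def K_def ..
  have fail: "measure_pmf.prob (QVI4 qme1 qme2 P r H pi_init \<epsilon> \<delta>) {st. \<not> J K st} \<le> \<delta>"
    using outer_prob[OF z, of K pi_init] KN unfolding Q N_def K_def by simp
  have sub: "{st. J K st} \<subseteq> {(V, pol, Q). \<forall>h<H. \<forall>s.
              Vstar P r H h s - \<epsilon> \<le> V h s \<and> V h s \<le> Vpi P r H pol h s
              \<and> Vpi P r H pol h s \<le> Vstar P r H h s
              \<and> (\<forall>a. Qstar P r H h s a - \<epsilon> \<le> Q h s a \<and> Q h s a \<le> Qpi P r H pol h s a
                     \<and> Qpi P r H pol h s a \<le> Qstar P r H h s a)}"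
  proof
    fix st assume "st \<in> {st. J K st}"
    then have JK: "J K st" by simp
    obtain V pol Q where st: "st = (V, pol, Q)" by (cases st) auto
    show "st \<in> {(V, pol, Q). \<forall>h<H. \<forall>s.
              Vstar P r H h s - \<epsilon> \<le> V h s \<and> V h s \<le> Vpi P r H pol h s
              \<and> Vpi P r H pol h s \<le> Vstar P r H h s
              \<and> (\<forall>a. Qstar P r H h s a - \<epsilon> \<le> Q h s a \<and> Q h s a \<le> Qpi P r H pol h s a
                     \<and> Qpi P r H pol h s a \<le> Qstar P r H h s a)}"
      unfolding st using J_final[of V pol Q] JK st unfolding K_def by auto
  qed
  have "1 - \<delta> \<le> measure_pmf.prob (QVI4 qme1 qme2 P r H pi_init \<epsilon> \<delta>) {st. J K st}"
    using fail prob_not[of "QVI4 qme1 qme2 P r H pi_init \<epsilon> \<delta>" "J K"] by simp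
  also have "\<dots> \<le> measure_pmf.prob (QVI4 qme1 qme2 P r H pi_init \<epsilon> \<delta>) {(V, pol, Q). \<forall>h<H. \<forall>s.
              Vstar P r H h s - \<epsilon> \<le> V h s \<and> V h s \<le> Vpi P r H pol h s
              \<and> Vpi P r H pol h s \<le> Vstar P r H h s
              \<and> (\<forall>a. Qstar P r H h s a - \<epsilon> \<le> Q h s a \<and> Q h s a \<le> Qpi P r H pol h s a
                     \<and> Qpi P r H pol h s a \<le> Qstar P r H h s a)}"
    by (rule measure_pmf.finite_measure_mono[OF sub]) simp
  finally show ?thesis .
qed


end
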